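(* Let $0<q<1$, let $\alpha\ge0$ and $k,N\ge1$ be integers. Then \[ M_\alpha(k,N)=\frac{q^{k(2-2N-\alpha)}}{N\,(1-q^2)^k}\, \frac{(q^{2N};q^2)_k\,(q^{2N+2\alpha};q^2)_k}{(q^2;q^2)_k}\; {}_3\phi_2\!\left(\begin{matrix}q^{2-2k},\,q^{2-2N},\,q^{2-2N-2\alpha}\\ q^{2-2N-2k},\,q^{2-2N-2\alpha-2k}\end{matrix};q^2,\,q^{-2k}\right), \] where the ${}_3\phi_2$ is the terminating sum over $l=0,\dots,k-1$.
   Context: Notation: $(a;q)_n=\prod_{i=0}^{n-1}(1-aq^i)$ (with $(a;q)_0=1$); ${}_3\phi_2\!\left(\begin{smallmatrix}a_1,a_2,a_3\\ b_1,b_2\end{smallmatrix};p,z\right)=\sum_{l\ge0}\frac{(a_1;p)_l(a_2;p)_l(a_3;p)_l}{(b_1;p)_l(b_2;p)_l(p;p)_l}z^l$. $s_\lambda$ denotes the Schur function of a partition $\lambda$; $s_\lambda(1,q^2,\dots,q^{2m-2})$ is its evaluation at $m$ variables $q^{2i}$, and $s_\lambda(1,q^2,q^4,\dots)$ its principal specialisation in infinitely many variables. $M_\alpha(k,N)$ is the $k$-th moment $\frac1N\mathbb{E}[\sum_{i=1}^N X_i^k]=\frac1N\mathbb{E}[p_k(X_1,\dots,X_N)]$ of the normalised one-point function of the discrete $q$-Laguerre orthogonal polynomial ensemble with parameter $\alpha$. It is understood here as determined by linearity from the following formula (due to Morozov–Popolitov–Shakirov, taken as given) for expectations of Schur polynomials: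 for every partition $\lambda$ of size $|\lambda|=k$, \[ \mathbb{E}[s_\lambda(X_1,\dots,X_N)]=\frac{q^{k(2-2N-\alpha)}}{(1-q^2)^k}\, \frac{s_\lambda(1,q^2,\dots,q^{2N-2})\,s_\lambda(1,q^2,\dots,q^{2N+2\alpha-2})}{s_\lambda(1,q^2,q^4,\dots)}, \] together with the expansion of the power sum $p_k=\sum_{|\lambda|=k}\chi^\lambda_{(k)}s_\lambda$ in Schur functions ($\chi^\lambda_{(k)}$ the irreducible symmetric-group character evaluated at a $k$-cycle). *)

theory Defs
  imports Complex_Main "HOL-Library.FuncSet"
begin

definition is_partition :: "nat \<Rightarrow> nat list \<Rightarrow> bool" where
  "is_partition k lam \<longleftrightarrow> sorted_wrt (\<ge>) lam \<and> (\<forall>x\<in>set lam. 0 < x) \<and> sum_list lam = k"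

definition partitions :: "nat \<Rightarrow> nat list set" where
  "partitions k = {lam. is_partition k lam}"

definition cells :: "nat list \<Rightarrow> (nat \<times> nat) set" where
  "cells lam = {(i, j). i < length lam \<and> j < lam ! i}"

definition ssyt :: "nat list \<Rightarrow> nat \<Rightarrow> (nat \<times> nat \<Rightarrow> nat) set" where
  "ssyt lam n = {T \<in> cells lam \<rightarrow>\<^sub>E {..<n}.
      (\<forall>i j. (i, Suc j) \<in> cells lam \<longrightarrow> T (i, j) \<le> T (i, Suc j)) \<and>
      (\<forall>i j. (Suc i, j) \<in> cells lam \<longrightarrow> T (i, j) < T (Suc i, j))}"

definition schur :: "nat list \<Rightarrow> nat \<Rightarrow> (nat \<Rightarrow> real) \<Rightarrow> real" where
  "schur lam n x = (\<Sum>T\<in>ssyt lam n. \<Prod>c\<in>cells lam. x (T c))"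

definition schur_pspec :: "nat list \<Rightarrow> nat \<Rightarrow> real \<Rightarrow> real" where
  "schur_pspec lam m q = schur lam m (\<lambda>i. q ^ (2 * i))"

definition schur_pspec_inf :: "nat list \<Rightarrow> real \<Rightarrow> real" where
  "schur_pspec_inf lam q = lim (\<lambda>m. schur_pspec lam m q)"

text \<open>chi k lam = character of irreducible S_k-module lam at a k-cycle, characterised
  (uniquely) by the expansion p_k = sum_{|lam|=k} chi^lam_(k) s_lam, valid in any number of
  variables.\<close>
definition chi_cycle :: "nat \<Rightarrow> nat list \<Rightarrow> real" where
  "chi_cycle k = (THE c. (\<forall>lam. lam \<notin> partitions k \<longrightarrow> c lam = 0) \<and>
      (\<forall>n (x :: nat \<Rightarrow> real). (\<Sum>i<n. x i ^ k) = (\<Sum>lam\<in>partitions k. c lam * schur lam n x)))"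

text \<open>E[s_lam(X_1..X_N)] (Morozov--Popolitov--Shakirov), k = |lam|.\<close>
definition E_schur :: "real \<Rightarrow> nat \<Rightarrow> nat \<Rightarrow> nat list \<Rightarrow> real" where
  "E_schur q alpha N lam =
     (let k = sum_list lam in
      q powi (int k * (2 - 2 * int N - int alpha)) / (1 - q^2) ^ k *
      (schur_pspec lam N q * schur_pspec lam (N + alpha) q / schur_pspec_inf lam q))"

definition moment :: "real \<Rightarrow> nat \<Rightarrow> nat \<Rightarrow> nat \<Rightarrow> real" where
  "moment q alpha k N = (1 / real N) * (\<Sum>lam\<in>partitions k. chi_cycle k lam * E_schur q alpha N lam)"

definition qpoch :: "real \<Rightarrow> real \<Rightarrow> nat \<Rightarrow> real" where
  "qpoch a p n = (\<Prod>i<n. 1 - a * p ^ i)"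

definition phi32_trunc :: "real \<Rightarrow> real \<Rightarrow> real \<Rightarrow> real \<Rightarrow> real \<Rightarrow> real \<Rightarrow> real \<Rightarrow> nat \<Rightarrow> real" where
  "phi32_trunc a1 a2 a3 b1 b2 p z n =
     (\<Sum>l<n. qpoch a1 p l * qpoch a2 p l * qpoch a3 p l /
             (qpoch b1 p l * qpoch b2 p l * qpoch p p l) * z ^ l)"

end

theory Submission
  imports Defs
begin


definition hk :: "nat \<Rightarrow> nat \<Rightarrow> nat list" where
  "hk a b = a # replicate b 1"

lemma cells_hk: "cells (hk a b) = {(0,j)|j. j<a} \<union> {(i,0)|i. 0<i \<and> i \<le> b}"
  unfolding cells_def hk_def
  by (auto simp: nth_Cons split: nat.splits)

lemma finite_cells: "finite (cells lam)"
proof -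
  have "cells lam \<subseteq> (SIGMA i:{..<length lam}. {..<lam!i})" unfolding cells_def by auto
  thus ?thesis by (rule finite_subset) auto
qed

lemma finite_ssyt: "finite (ssyt lam n)"
proof -
  have "ssyt lam n \<subseteq> cells lam \<rightarrow>\<^sub>E {..<n}" unfolding ssyt_def by auto
  thus ?thesis by (rule finite_subset) (auto intro: finite_PiE finite_cells)
qed

lemma ssyt_hk:
  "T \<in> ssyt (hk a b) n \<longleftrightarrow> T \<in> cells (hk a b) \<rightarrow>\<^sub>E {..<n} \<and>
     (\<forall>j. Suc j < a \<longrightarrow> T (0,j) \<le> T (0, Suc j)) \<and>
     (\<forall>i. Suc i \<le> b \<longrightarrow> T (i,0) < T (Suc i, 0))"
  unfolding ssyt_def cells_hk by auto


lemma chain_le: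
  assumes "\<And>j. Suc j < a \<Longrightarrow> (f j :: nat) \<le> f (Suc j)" "j \<le> j'" "j' < a"
  shows "f j \<le> f j'"
  using assms(2,3)
proof (induction j')
  case 0 thus ?case by simp
next
  case (Suc j')
  show ?case
  proof (cases "j = Suc j'")
    case False
    hence "f j \<le> f j'" using Suc by simp
    also have "\<dots> \<le> f (Suc j')" using assms(1) Suc.prems by simp
    finally show ?thesis .
  qed simp
qed

lemma chain_lt:
  assumes "\<And>i. Suc i \<le> b \<Longrightarrow> (f i :: nat) < f (Suc i)" "i < i'" "i' \<le> b"
  shows "f i < f i'"
  using assms(2,3)
proof (induction i')
  case 0 thus ?case by simp
next
  case (Suc i')
  show ?case
  proof (cases "i = i'")
    case True thus ?thesis using assms(1) Suc.prems by simp
  next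
    case False
    hence "f i < f i'" using Suc by simp
    also have "\<dots> < f (Suc i')" using assms(1) Suc.prems by simp
    finally show ?thesis .
  qed
qed

lemma ssyt_val: "T \<in> ssyt lam n \<Longrightarrow> c \<in> cells lam \<Longrightarrow> T c < n"
  unfolding ssyt_def by (auto simp: PiE_iff)

lemma ssyt_ext: "T \<in> ssyt lam n \<Longrightarrow> c \<notin> cells lam \<Longrightarrow> T c = undefined"
  unfolding ssyt_def by (cases c) (auto simp: PiE_iff extensional_def)

lemma hk_row_le:
  assumes "T \<in> ssyt (hk a b) n" "j < a"
  shows "T (0,j) \<le> T (0,a-1)"
proof -
  have "\<And>j. Suc j < a \<Longrightarrow> T (0,j) \<le> T (0, Suc j)" using assms(1) unfolding ssyt_hk by auto
  from chain_le[of a "\<lambda>j. T (0,j)", OF this] assms(2) show ?thesis by simp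
qed

lemma hk_col_lt:
  assumes "T \<in> ssyt (hk a b) n" "i < i'" "i' \<le> b"
  shows "T (i,0) < T (i',0)"
proof -
  have "\<And>i. Suc i \<le> b \<Longrightarrow> T (i,0) < T (Suc i, 0)" using assms(1) unfolding ssyt_hk by auto
  from chain_lt[of b "\<lambda>i. T (i,0)", OF this] assms(2,3) show ?thesis by simp
qed

lemma hk_cell_row: "j < a \<Longrightarrow> (0,j) \<in> cells (hk a b)" by (simp add: cells_hk)
lemma hk_cell_col: "0 < i \<Longrightarrow> i \<le> b \<Longrightarrow> (i,0) \<in> cells (hk a b)" by (simp add: cells_hk)

lemma hk_cell_cases:
  assumes "c \<in> cells (hk a b)"
  obtains j where "c = (0,j)" "j < a" | i where "c = (i,0)" "0 < i" "i \<le> b"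
  using assms unfolding cells_hk by blast

definition wt :: "nat list \<Rightarrow> (nat \<Rightarrow> real) \<Rightarrow> (nat \<times> nat \<Rightarrow> nat) \<Rightarrow> real" where
  "wt lam x T = (\<Prod>c\<in>cells lam. x (T c))"

lemma schur_wt: "schur lam n x = (\<Sum>T\<in>ssyt lam n. wt lam x T)"
  unfolding schur_def wt_def ..

lemma E1:
  assumes "0 < a"
  shows "{T \<in> ssyt (hk a b) (Suc m). \<not> (T (0,a-1) = m) \<and> \<not> (1 \<le> b \<and> T (b,0) = m)}
        = ssyt (hk a b) m" (is "?L = ?R")
proof
  show "?L \<subseteq> ?R"
  proof
    fix T assume T: "T \<in> ?L"
    hence TS: "T \<in> ssyt (hk a b) (Suc m)" by simp
    have "T c < m" if c: "c \<in> cells (hk a b)" for c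
      using c
    proof (cases rule: hk_cell_cases)
      case (1 j)
      have "T (0,j) \<le> T (0,a-1)" using hk_row_le[OF TS 1(2)] .
      moreover have "T (0,a-1) < Suc m" using ssyt_val[OF TS hk_cell_row[of "a-1" a b]] assms by simp
      ultimately show ?thesis using T 1 by simp
    next
      case (2 i)
      have "T (i,0) \<le> T (b,0)" using hk_col_lt[OF TS, of i b] 2 by (cases "i = b") auto
      moreover have "T (b,0) < Suc m" using ssyt_val[OF TS hk_cell_col[of b b a]] 2 by simp
      ultimately show ?thesis using T 2 by simp
    qed
    thus "T \<in> ?R" using TS unfolding ssyt_hk by (auto simp: PiE_iff)
  qed
next
  show "?R \<subseteq> ?L"
  proof
    fix T assume T: "T \<in> ?R"
    have "T (0,a-1) < m" using ssyt_val[OF T hk_cell_row[of "a-1" a b]] assms by simp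
    moreover have "1 \<le> b \<Longrightarrow> T (b,0) < m" using ssyt_val[OF T hk_cell_col[of b b a]] by simp
    moreover have "T \<in> ssyt (hk a b) (Suc m)" using T unfolding ssyt_hk by (auto simp: PiE_iff)
    ultimately show "T \<in> ?L" by auto
  qed
qed



lemma cells_hk_row_insert:
  assumes "2 \<le> a"
  shows "cells (hk a b) = insert (0,a-1) (cells (hk (a-1) b))" "(0,a-1) \<notin> cells (hk (a-1) b)"
  using assms unfolding cells_hk by auto

lemma cells_hk_col_insert:
  assumes "1 \<le> b"
  shows "cells (hk a b) = insert (b,0) (cells (hk a (b-1)))" "(b,0) \<notin> cells (hk a (b-1))"
  using assms unfolding cells_hk by auto

lemma E2:
  assumes "2 \<le> a"
  shows "{T \<in> ssyt (hk a b) (Suc m). T (0,a-1) = m}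
        = (\<lambda>U. U((0,a-1) := m)) ` ssyt (hk (a-1) b) (Suc m)" (is "?L = ?g ` ?R")
    and "inj_on (\<lambda>U. U((0,a-1) := m)) (ssyt (hk (a-1) b) (Suc m))"
    and "U \<in> ssyt (hk (a-1) b) (Suc m) \<Longrightarrow> wt (hk a b) x (U((0,a-1) := m)) = x m * wt (hk (a-1) b) x U"
proof -
  note ci = cells_hk_row_insert[OF assms, of b]
  have inv: "(?g U)((0,a-1) := undefined) = U" if "U \<in> ?R" for U
  proof
    fix c show "((?g U)((0,a-1) := undefined)) c = U c"
      using ssyt_ext[OF that, of "(0,a-1)"] ci(2) by auto
  qed
  show "inj_on ?g ?R" by (rule inj_on_inverseI[of _ "\<lambda>T. T((0,a-1) := undefined)"]) (rule inv)
  show "U \<in> ?R \<Longrightarrow> wt (hk a b) x (?g U) = x m * wt (hk (a-1) b) x U"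
  proof -
    have "wt (hk a b) x (?g U) = x m * (\<Prod>c\<in>cells (hk (a-1) b). x ((?g U) c))"
      unfolding wt_def ci(1) by (subst prod.insert) (use ci(2) finite_cells in auto)
    also have "(\<Prod>c\<in>cells (hk (a-1) b). x ((?g U) c)) = wt (hk (a-1) b) x U"
      unfolding wt_def by (rule prod.cong) (use ci(2) in auto)
    finally show ?thesis .
  qed
  show "?L = ?g ` ?R"
  proof
    show "?g ` ?R \<subseteq> ?L"
    proof
      fix T assume "T \<in> ?g ` ?R"
      then obtain U where U: "U \<in> ?R" and TU: "T = ?g U" by blast
      have v: "U c < Suc m" if "c \<in> cells (hk (a-1) b)" for c using ssyt_val[OF U that] .
      have row: "T (0,j) \<le> T (0, Suc j)" if "Suc j < a" for j
      proof (cases "Suc j < a - 1")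
        case True
        thus ?thesis using U TU unfolding ssyt_hk by auto
      next
        case False
        hence "Suc j = a - 1" using that by simp
        thus ?thesis using TU v[of "(0,j)"] hk_cell_row[of j "a-1" b] by auto
      qed
      have col: "T (i,0) < T (Suc i, 0)" if "Suc i \<le> b" for i
        using U TU that assms unfolding ssyt_hk by auto
      have pie: "T \<in> cells (hk a b) \<rightarrow>\<^sub>E {..<Suc m}"
        using U TU ci unfolding ssyt_hk by (auto simp: PiE_iff extensional_def)
      show "T \<in> ?L" using row col pie TU unfolding ssyt_hk by auto
    qed
  next
    show "?L \<subseteq> ?g ` ?R"
    proof
      fix T assume T: "T \<in> ?L"
      hence TS: "T \<in> ssyt (hk a b) (Suc m)" and Tm: "T (0,a-1) = m" by auto
      define U where "U = T((0,a-1) := undefined)"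
      have pie: "U \<in> cells (hk (a-1) b) \<rightarrow>\<^sub>E {..<Suc m}"
      proof (rule PiE_I)
        fix c assume c: "c \<in> cells (hk (a-1) b)"
        hence "c \<noteq> (0,a-1)" "c \<in> cells (hk a b)" using ci by auto
        thus "U c \<in> {..<Suc m}" using ssyt_val[OF TS] unfolding U_def by auto
      next
        fix c assume c: "c \<notin> cells (hk (a-1) b)"
        show "U c = undefined"
        proof (cases "c = (0,a-1)")
          case False
          hence "c \<notin> cells (hk a b)" using c ci by auto
          thus ?thesis using ssyt_ext[OF TS] False unfolding U_def by auto
        qed (simp add: U_def)
      qed
      have row: "U (0,j) \<le> U (0, Suc j)" if "Suc j < a - 1" for j
        using that TS unfolding U_def ssyt_hk by auto
      have col: "U (i,0) < U (Suc i, 0)" if "Suc i \<le> b" for i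
        using that TS assms unfolding U_def ssyt_hk by auto
      have "U \<in> ?R" using pie row col unfolding ssyt_hk by blast
      moreover have "T = ?g U" unfolding U_def using Tm by auto
      ultimately show "T \<in> ?g ` ?R" by blast
    qed
  qed
qed



lemma E3:
  assumes "1 \<le> b" "0 < a"
  shows "{T \<in> ssyt (hk a b) (Suc m). \<not> T (0,a-1) = m \<and> (1 \<le> b \<and> T (b,0) = m)}
        = (\<lambda>U. U((b,0) := m)) ` ssyt (hk a (b-1)) m" (is "?L = ?g ` ?R")
    and "inj_on (\<lambda>U. U((b,0) := m)) (ssyt (hk a (b-1)) m)"
    and "U \<in> ssyt (hk a (b-1)) m \<Longrightarrow> wt (hk a b) x (U((b,0) := m)) = x m * wt (hk a (b-1)) x U"
proof -
  note ci = cells_hk_col_insert[OF assms(1), of a]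
  have inv: "(?g U)((b,0) := undefined) = U" if "U \<in> ?R" for U
  proof
    fix c show "((?g U)((b,0) := undefined)) c = U c"
      using ssyt_ext[OF that, of "(b,0)"] ci(2) by auto
  qed
  show "inj_on ?g ?R" by (rule inj_on_inverseI[of _ "\<lambda>T. T((b,0) := undefined)"]) (rule inv)
  show "U \<in> ?R \<Longrightarrow> wt (hk a b) x (?g U) = x m * wt (hk a (b-1)) x U"
  proof -
    have "wt (hk a b) x (?g U) = x m * (\<Prod>c\<in>cells (hk a (b-1)). x ((?g U) c))"
      unfolding wt_def ci(1) by (subst prod.insert) (use ci(2) finite_cells in auto)
    also have "(\<Prod>c\<in>cells (hk a (b-1)). x ((?g U) c)) = wt (hk a (b-1)) x U"
      unfolding wt_def by (rule prod.cong) (use ci(2) in auto)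
    finally show ?thesis .
  qed
  show "?L = ?g ` ?R"
  proof
    show "?g ` ?R \<subseteq> ?L"
    proof
      fix T assume "T \<in> ?g ` ?R"
      then obtain U where U: "U \<in> ?R" and TU: "T = ?g U" by blast
      have v: "U c < m" if "c \<in> cells (hk a (b-1))" for c using ssyt_val[OF U that] .
      have row: "T (0,j) \<le> T (0, Suc j)" if "Suc j < a" for j
        using U TU that assms unfolding ssyt_hk by auto
      have col: "T (i,0) < T (Suc i, 0)" if "Suc i \<le> b" for i
      proof (cases "Suc i \<le> b - 1")
        case True
        thus ?thesis using U TU unfolding ssyt_hk by auto
      next
        case False
        hence "Suc i = b" using that by simp
        moreover have "(i,0) \<in> cells (hk a (b-1))"
          using \<open>Suc i = b\<close> assms by (auto simp: cells_hk)
        ultimately show ?thesis using TU v[of "(i,0)"] by auto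
      qed
      have pie: "T \<in> cells (hk a b) \<rightarrow>\<^sub>E {..<Suc m}"
        using U TU ci unfolding ssyt_hk by (auto simp: PiE_iff extensional_def)
      have "T (0,a-1) < m" using TU v[of "(0,a-1)"] hk_cell_row[of "a-1" a "b-1"] assms by auto
      thus "T \<in> ?L" using row col pie TU assms unfolding ssyt_hk by auto
    qed
  next
    show "?L \<subseteq> ?g ` ?R"
    proof
      fix T assume T: "T \<in> ?L"
      hence TS: "T \<in> ssyt (hk a b) (Suc m)" and Tm: "T (b,0) = m" and Tn: "T (0,a-1) \<noteq> m" by auto
      define U where "U = T((b,0) := undefined)"
      have lt: "T c < m" if c: "c \<in> cells (hk a (b-1))" for c
        using c
      proof (cases rule: hk_cell_cases)
        case (1 j)
        have "T (0,j) \<le> T (0,a-1)" using hk_row_le[OF TS 1(2)] .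
        moreover have "T (0,a-1) < Suc m" using ssyt_val[OF TS hk_cell_row[of "a-1" a b]] assms by simp
        ultimately show ?thesis using Tn 1 by simp
      next
        case (2 i)
        show ?thesis using hk_col_lt[OF TS, of i b] 2 Tm by simp
      qed
      have pie: "U \<in> cells (hk a (b-1)) \<rightarrow>\<^sub>E {..<m}"
      proof (rule PiE_I)
        fix c assume c: "c \<in> cells (hk a (b-1))"
        hence "c \<noteq> (b,0)" using ci by auto
        thus "U c \<in> {..<m}" using lt[OF c] unfolding U_def by auto
      next
        fix c assume c: "c \<notin> cells (hk a (b-1))"
        show "U c = undefined"
        proof (cases "c = (b,0)")
          case False
          hence "c \<notin> cells (hk a b)" using c ci by auto
          thus ?thesis using ssyt_ext[OF TS] False unfolding U_def by auto
        qed (simp add: U_def)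
      qed
      have row: "U (0,j) \<le> U (0, Suc j)" if "Suc j < a" for j
        using that TS assms unfolding U_def ssyt_hk by auto
      have col: "U (i,0) < U (Suc i, 0)" if "Suc i \<le> b - 1" for i
        using that TS unfolding U_def ssyt_hk by auto
      have "U \<in> ?R" using pie row col unfolding ssyt_hk by blast
      moreover have "T = ?g U" unfolding U_def using Tm by auto
      ultimately show "T \<in> ?g ` ?R" by blast
    qed
  qed
qed



lemma cells_hk10: "cells (hk 1 0) = {(0,0)}"
  unfolding cells_hk by auto

definition T0m :: "nat \<Rightarrow> nat \<times> nat \<Rightarrow> nat" where
  "T0m m = (\<lambda>_. undefined)((0,0) := m)"

lemma T0m_in: "T0m m \<in> ssyt (hk 1 0) (Suc m)"
proof -
  have pie: "T0m m \<in> cells (hk 1 0) \<rightarrow>\<^sub>E {..<Suc m}"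
    unfolding cells_hk10 T0m_def by (rule PiE_I) auto
  show ?thesis unfolding ssyt_hk using pie by simp
qed

lemma T0m_eq: 
  assumes "T \<in> ssyt (hk 1 0) (Suc m)" "T (0,0) = m"
  shows "T = T0m m"
proof (rule ext)
  fix c show "T c = T0m m c"
  proof (cases "c = (0,0)")
    case True thus ?thesis using assms(2) by (simp add: T0m_def)
  next
    case False
    hence "c \<notin> cells (hk 1 0)" unfolding cells_hk10 by simp
    from ssyt_ext[OF assms(1) this] False show ?thesis by (simp add: T0m_def)
  qed
qed

lemma E4a: "{T \<in> ssyt (hk 1 0) (Suc m). T (0,0) = m} = {T0m m}"
proof (rule set_eqI)
  fix T show "T \<in> {T \<in> ssyt (hk 1 0) (Suc m). T (0,0) = m} \<longleftrightarrow> T \<in> {T0m m}"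
  proof
    assume "T \<in> {T \<in> ssyt (hk 1 0) (Suc m). T (0,0) = m}"
    thus "T \<in> {T0m m}" using T0m_eq by blast
  next
    assume "T \<in> {T0m m}"
    hence "T = T0m m" by simp
    moreover have "T0m m (0,0) = m" by (simp add: T0m_def)
    ultimately show "T \<in> {T \<in> ssyt (hk 1 0) (Suc m). T (0,0) = m}" using T0m_in by simp
  qed
qed

lemma E4b:
  assumes "b \<noteq> 0"
  shows "{T \<in> ssyt (hk 1 b) (Suc m). T (0,0) = m} = {}"
proof (rule equals0I)
  fix T assume "T \<in> {T \<in> ssyt (hk 1 b) (Suc m). T (0,0) = m}"
  hence T: "T \<in> ssyt (hk 1 b) (Suc m)" "T (0,0) = m" by auto
  have "T (0,0) < T (1,0)" using hk_col_lt[OF T(1), of 0 1] assms by simp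
  moreover have "T (1,0) < Suc m" using ssyt_val[OF T(1) hk_cell_col[of 1 b 1]] assms by simp
  ultimately show False using T(2) by simp
qed

lemma E4:
  "{T \<in> ssyt (hk 1 b) (Suc m). T (0,0) = m} =
     (if b = 0 then {(\<lambda>_. undefined)((0,0) := m)} else {})"
  using E4a[of m] E4b[of b m] unfolding T0m_def by (cases "b = 0") simp_all

lemma schur_hk_0: "0 < a \<Longrightarrow> schur (hk a b) 0 x = 0"
proof -
  assume a: "0 < a"
  have "ssyt (hk a b) 0 = {}"
  proof (rule equals0I)
    fix T assume "T \<in> ssyt (hk a b) 0"
    from ssyt_val[OF this hk_cell_row[of 0 a b]] a show False by simp
  qed
  thus ?thesis by (simp add: schur_def)
qed


lemma schur_hk_rec:
  assumes "0 < a"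
  shows "schur (hk a b) (Suc m) x = schur (hk a b) m x
     + (if 2 \<le> a then x m * schur (hk (a-1) b) (Suc m) x else if b = 0 then x m else 0)
     + (if 1 \<le> b then x m * schur (hk a (b-1)) m x else 0)"
proof -
  let ?S = "ssyt (hk a b) (Suc m)"
  let ?w = "wt (hk a b) x"
  let ?A = "{T. T (0,a-1) = m}"
  let ?B = "{T. 1 \<le> b \<and> T (b,0) = m}"
  have fin: "finite ?S" by (rule finite_ssyt)
  have "schur (hk a b) (Suc m) x = sum ?w (?S \<inter> ?A) + sum ?w (?S - ?A)"
    unfolding schur_wt by (rule sum.Int_Diff[OF fin])
  also have "sum ?w (?S - ?A) = sum ?w ((?S - ?A) \<inter> ?B) + sum ?w ((?S - ?A) - ?B)"
    by (rule sum.Int_Diff) (use fin in auto)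
  also have "(?S - ?A) - ?B = {T \<in> ?S. \<not> (T (0,a-1) = m) \<and> \<not> (1 \<le> b \<and> T (b,0) = m)}" by auto
  also have "\<dots> = ssyt (hk a b) m" by (rule E1[OF assms])
  also have "sum ?w (?S \<inter> ?A) = (if 2 \<le> a then x m * schur (hk (a-1) b) (Suc m) x else if b = 0 then x m else 0)"
  proof (cases "2 \<le> a")
    case True
    have "?S \<inter> ?A = {T \<in> ?S. T (0,a-1) = m}" by auto
    also have "\<dots> = (\<lambda>U. U((0,a-1) := m)) ` ssyt (hk (a-1) b) (Suc m)" by (rule E2(1)[OF True])
    finally have "sum ?w (?S \<inter> ?A) = sum (?w \<circ> (\<lambda>U. U((0,a-1) := m))) (ssyt (hk (a-1) b) (Suc m))"
      using sum.reindex[OF E2(2)[OF True]] by simp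
    also have "\<dots> = (\<Sum>U\<in>ssyt (hk (a-1) b) (Suc m). x m * wt (hk (a-1) b) x U)"
      by (rule sum.cong) (use E2(3)[OF True] in auto)
    finally show ?thesis using True by (simp add: schur_wt sum_distrib_left)
  next
    case False
    hence a1: "a = 1" using assms by simp
    have "?S \<inter> ?A = {T \<in> ssyt (hk 1 b) (Suc m). T (0,0) = m}" using a1 by auto
    also have "\<dots> = (if b = 0 then {(\<lambda>_. undefined)((0,0) := m)} else {})" by (rule E4)
    moreover have "wt (hk 1 0) x ((\<lambda>_. undefined)((0,0) := m)) = x m"
      by (simp add: wt_def cells_hk)
    ultimately show ?thesis using a1 by simp
  qed
  also have "sum ?w ((?S - ?A) \<inter> ?B) = (if 1 \<le> b then x m * schur (hk a (b-1)) m x else 0)"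
  proof (cases "1 \<le> b")
    case True
    have "(?S - ?A) \<inter> ?B = {T \<in> ?S. \<not> T (0,a-1) = m \<and> (1 \<le> b \<and> T (b,0) = m)}" by auto
    also have "\<dots> = (\<lambda>U. U((b,0) := m)) ` ssyt (hk a (b-1)) m" by (rule E3(1)[OF True assms])
    finally have "sum ?w ((?S - ?A) \<inter> ?B) = sum (?w \<circ> (\<lambda>U. U((b,0) := m))) (ssyt (hk a (b-1)) m)"
      using sum.reindex[OF E3(2)[OF True assms]] by simp
    also have "\<dots> = (\<Sum>U\<in>ssyt (hk a (b-1)) m. x m * wt (hk a (b-1)) x U)"
      by (rule sum.cong) (use E3(3)[OF True assms] in auto)
    finally show ?thesis using True by (simp add: schur_wt sum_distrib_left)
  next
    case False
    thus ?thesis by auto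
  qed
  finally show ?thesis by (simp add: schur_wt)
qed



definition PR :: "real \<Rightarrow> nat \<Rightarrow> nat \<Rightarrow> real" where
  "PR Q s t = (\<Prod>j\<in>{s..<t}. 1 - Q ^ j)"

definition cc :: "real \<Rightarrow> nat \<Rightarrow> nat \<Rightarrow> real" where
  "cc Q a b = Q ^ (b * (b + 1) div 2) / ((1 - Q ^ (a + b)) * PR Q 1 a * PR Q 1 (Suc b))"

definition Fh :: "real \<Rightarrow> nat \<Rightarrow> nat \<Rightarrow> nat \<Rightarrow> real" where
  "Fh Q a b m = (if m < b then 0 else cc Q a b * PR Q (m - b) (m + a))"

lemma PR_empty: "t \<le> s \<Longrightarrow> PR Q s t = 1"
  unfolding PR_def by simp

lemma PR_Suc_right: "s \<le> t \<Longrightarrow> PR Q s (Suc t) = PR Q s t * (1 - Q ^ t)"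
  unfolding PR_def by (simp add: prod.atLeastLessThan_Suc)

lemma PR_Suc_left: "s < t \<Longrightarrow> PR Q s t = (1 - Q ^ s) * PR Q (Suc s) t"
  unfolding PR_def by (simp add: prod.atLeast_Suc_lessThan)

lemma PR_zero: "0 < t \<Longrightarrow> PR Q 0 t = 0"
  using PR_Suc_left[of 0 t Q] by simp

lemma PR_pos: "0 < Q \<Longrightarrow> Q < 1 \<Longrightarrow> 0 < s \<Longrightarrow> 0 < PR Q s t"
  unfolding PR_def
proof (rule prod_pos)
  fix j assume "0 < Q" "Q < 1" "0 < s" "j \<in> {s..<t}"
  hence "Q ^ j < 1" using power_less_one_iff[of Q j] by auto
  thus "0 < 1 - Q ^ j" by simp
qed

lemma PR_concat: "s \<le> t \<Longrightarrow> t \<le> u \<Longrightarrow> PR Q s t * PR Q t u = PR Q s u"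
  unfolding PR_def by (rule prod.atLeastLessThan_concat)

lemma PR_shift: "PR Q s (s + n) = (\<Prod>i<n. 1 - Q ^ (s + i))"
  by (induction n) (simp_all add: PR_empty PR_Suc_right)

lemma pow_lt1: "0 < Q \<Longrightarrow> Q < 1 \<Longrightarrow> 0 < n \<Longrightarrow> Q ^ n < (1::real)"
  using power_less_one_iff[of Q n] by auto

lemma alg1: fixes t v A B D1 D2 D3 :: real assumes "D1 \<noteq> 0" "D2\<noteq>0" "D3\<noteq>0" "A\<noteq>0" "B\<noteq>0" "D1 = D3 + v*D2"
 shows "t*v/(A*D2*B*D3) = v*(t*v/(D1*A*(B*D3)) + t/(D1*(A*D2)*B))"
proof -
  have "v*(t*v/(D1*A*(B*D3)) + t/(D1*(A*D2)*B)) = v*t*(v*D2 + D3)/(D1*A*B*D2*D3)"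
    using assms(1-5) by (simp add: field_simps)
  also have "\<dots> = t*v/(A*D2*B*D3)" using assms by (simp add: add.commute ac_simps)
  finally show ?thesis ..
qed

lemma cc_rec:
  assumes Q: "0 < Q" "Q < 1" and a: "2 \<le> a" and b: "1 \<le> b"
  shows "cc Q a b * (1 - Q ^ (a + b)) = Q ^ b * (cc Q (a-1) b + cc Q a (b-1))"
proof -
  obtain a' where a': "a = Suc a'" "1 \<le> a'" using a by (cases a) auto
  obtain b' where b': "b = Suc b'" using b by (cases b) auto
  define A where "A = PR Q 1 a'"
  define B where "B = PR Q 1 (Suc b')"
  define u where "u = Q ^ a'"
  define v where "v = Q ^ Suc b'"
  define t where "t = Q ^ (b' * (b' + 1) div 2)"
  have A0: "A > 0" unfolding A_def using PR_pos Q by simp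
  have B0: "B > 0" unfolding B_def using PR_pos Q by simp
  have u1: "u < 1" unfolding u_def using pow_lt1[OF Q] a' by simp
  have v1: "v < 1" unfolding v_def using pow_lt1[OF Q, of "Suc b'"] by simp
  have u0: "u > 0" "v > 0" unfolding u_def v_def using Q by auto
  have uv1: "u * v < 1" using mult_strict_mono[of u 1 v 1] u1 v1 u0 by simp
  have T: "Q ^ (Suc b' * (Suc b' + 1) div 2) = t * v"
  proof -
    have h: "Suc b' * (Suc b' + 1) = b' * (b' + 1) + 2 * Suc b'" by (simp add: algebra_simps)
    have g: "\<And>x y::nat. (x + 2 * y) div 2 = x div 2 + y" by presburger
    have "Suc b' * (Suc b' + 1) div 2 = b' * (b' + 1) div 2 + Suc b'" unfolding h g ..
    thus ?thesis unfolding t_def v_def by (simp add: power_add)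
  qed
  have PA: "PR Q 1 (Suc a') = A * (1 - u)" unfolding A_def u_def using a' by (simp add: PR_Suc_right)
  have PB: "PR Q 1 (Suc (Suc b')) = B * (1 - v)" unfolding B_def v_def by (simp add: PR_Suc_right)
  have e1: "Q ^ (Suc a' + Suc b') = u * v * Q" unfolding u_def v_def by (simp add: power_add)
  have e2: "Q ^ (a' + Suc b') = u * v" unfolding u_def v_def by (simp add: power_add)
  have e3: "Q ^ (Suc a' + b') = u * v" unfolding u_def v_def by (simp add: power_add)
  have lhs: "cc Q a b * (1 - Q ^ (a + b)) = t * v / (A * (1 - u) * B * (1 - v))"
  proof -
    have "1 - u * v * Q \<noteq> 0" using mult_strict_mono[of "u*v" 1 Q 1] uv1 Q u0 by simp
    moreover have "cc Q a b = t * v / ((1 - u * v * Q) * (A * (1 - u)) * (B * (1 - v)))"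
      unfolding cc_def a' b' T PA PB e1 by simp
    moreover have "1 - Q ^ (a + b) = 1 - u * v * Q" unfolding a' b' e1 by simp
    ultimately have "cc Q a b * (1 - Q ^ (a + b)) = t * v / ((1 - u * v * Q) * (A * (1 - u)) * (B * (1 - v))) * (1 - u * v * Q)"
      by simp
    also have "\<dots> = t * v / ((A * (1 - u)) * (B * (1 - v)))"
      using \<open>1 - u * v * Q \<noteq> 0\<close> by simp
    finally show ?thesis by (simp add: mult.assoc)
  qed
  have am: "a - 1 = a'" "b - 1 = b'" using a' b' by auto
  have c1: "cc Q (a-1) b = t * v / ((1 - u * v) * A * (B * (1 - v)))"
    unfolding am b'(1) cc_def T e2 PB A_def[symmetric] ..
  have c2: "cc Q a (b-1) = t / ((1 - u * v) * (A * (1 - u)) * B)"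
    unfolding am a'(1) cc_def e3 PA B_def[symmetric] t_def[symmetric] ..
  have qb: "Q ^ b = v" unfolding b' v_def ..
  have nz: "1 - u * v \<noteq> 0" "1 - u \<noteq> 0" "1 - v \<noteq> 0" "A \<noteq> 0" "B \<noteq> 0"
    using uv1 u1 v1 A0 B0 by auto
  have rel: "1 - u * v = (1 - v) + v * (1 - u)" by (simp add: algebra_simps)
  have "t * v / (A * (1 - u) * B * (1 - v)) = v * (t * v / ((1 - u * v) * A * (B * (1 - v))) + t / ((1 - u * v) * (A * (1 - u)) * B))"
    by (rule alg1[OF nz(1,2,3,4,5) rel])
  thus ?thesis unfolding lhs qb c1 c2 by simp
qed


lemma cc_rec_a1:
  assumes Q: "0 < Q" "Q < 1" and b: "1 \<le> b"
  shows "cc Q 1 b * (1 - Q ^ (1 + b)) = Q ^ b * cc Q 1 (b-1)"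
proof -
  obtain b' where b': "b = Suc b'" using b by (cases b) auto
  define B where "B = PR Q 1 (Suc b')"
  define v where "v = Q ^ Suc b'"
  define t where "t = Q ^ (b' * (b' + 1) div 2)"
  have B0: "B > 0" unfolding B_def using PR_pos Q by simp
  have v1: "v < 1" unfolding v_def using pow_lt1[OF Q, of "Suc b'"] by simp
  have T: "Q ^ (Suc b' * (Suc b' + 1) div 2) = t * v"
  proof -
    have h: "Suc b' * (Suc b' + 1) = b' * (b' + 1) + 2 * Suc b'" by (simp add: algebra_simps)
    have g: "\<And>x y::nat. (x + 2 * y) div 2 = x div 2 + y" by presburger
    have "Suc b' * (Suc b' + 1) div 2 = b' * (b' + 1) div 2 + Suc b'" unfolding h g ..
    thus ?thesis unfolding t_def v_def by (simp add: power_add)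
  qed
  have PB: "PR Q 1 (Suc (Suc b')) = B * (1 - v)" unfolding B_def v_def by (simp add: PR_Suc_right)
  have P1: "PR Q 1 1 = 1" by (simp add: PR_empty)
  have e: "Q ^ (1 + Suc b') = v * Q" "Q ^ (1 + b') = v" unfolding v_def by simp_all
  have c1: "cc Q 1 b = t * v / ((1 - v * Q) * 1 * (B * (1 - v)))"
    unfolding b' cc_def T PB P1 e(1) ..
  have c2: "cc Q 1 (b - 1) = t / ((1 - v) * 1 * B)"
    unfolding b' diff_Suc_1 cc_def P1 e(2) B_def[symmetric] t_def[symmetric] ..
  have nz: "1 - v * Q \<noteq> 0" "1 - v \<noteq> 0" "B \<noteq> 0"
    using mult_strict_mono[of v 1 Q 1] v1 Q B0 by (auto simp: v_def)
  have qb: "Q ^ b = v" "Q ^ (1 + b) = v * Q" unfolding b' v_def by simp_all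
  have "cc Q 1 b * (1 - Q ^ (1 + b)) = t * v / ((1 - v * Q) * 1 * (B * (1 - v))) * (1 - v * Q)"
    unfolding c1 qb ..
  also have "\<dots> = t * v / (B * (1 - v))" using nz(1) by simp
  also have "\<dots> = v * (t / ((1 - v) * 1 * B))" by (simp add: ac_simps)
  also have "\<dots> = Q ^ b * cc Q 1 (b-1)" unfolding c2 qb ..
  finally show ?thesis .
qed

lemma cc_rec_b0:
  assumes Q: "0 < Q" "Q < 1" and a: "2 \<le> a"
  shows "cc Q a 0 * (1 - Q ^ a) = cc Q (a-1) 0"
proof -
  obtain a' where a': "a = Suc a'" "1 \<le> a'" using a by (cases a) auto
  define A where "A = PR Q 1 a'"
  define u where "u = Q ^ a'"
  have A0: "A > 0" unfolding A_def using PR_pos Q by simp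
  have u1: "u < 1" unfolding u_def using pow_lt1[OF Q] a' by simp
  have PA: "PR Q 1 (Suc a') = A * (1 - u)" unfolding A_def u_def using a' by (simp add: PR_Suc_right)
  have P1: "PR Q 1 1 = 1" by (simp add: PR_empty)
  have P1': "PR Q 1 (Suc 0) = 1" by (simp add: PR_empty)
  have c1: "cc Q a 0 = 1 / ((1 - Q ^ Suc a') * (A * (1 - u)) * 1)"
    unfolding a'(1) cc_def PA P1' by simp
  have c2: "cc Q (a - 1) 0 = 1 / ((1 - u) * A * 1)"
    unfolding a'(1) diff_Suc_1 cc_def P1' A_def[symmetric] by (simp add: u_def)
  have nz: "1 - Q ^ Suc a' \<noteq> 0" "1 - u \<noteq> 0" "A \<noteq> 0"
    using pow_lt1[OF Q, of "Suc a'"] u1 A0 by auto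
  have e: "1 - Q ^ a = 1 - Q ^ Suc a'" using a' by simp
  have "cc Q a 0 * (1 - Q ^ a) = 1 / ((1 - Q ^ Suc a') * (A * (1 - u)) * 1) * (1 - Q ^ Suc a')"
    by (simp only: c1 e)
  also have "\<dots> = 1 / (A * (1 - u))" using nz(1) by simp
  also have "\<dots> = cc Q (a - 1) 0" unfolding c2 by (simp add: ac_simps)
  finally show ?thesis .
qed

lemma cc_rec_11:
  assumes Q: "0 < Q" "Q < 1"
  shows "cc Q 1 0 * (1 - Q ^ 1) = 1"
proof -
  have "cc Q 1 0 = 1 / (1 - Q)" unfolding cc_def by (simp add: PR_empty)
  thus ?thesis using Q by simp
qed

lemma cc_key:
  assumes Q: "0 < Q" "Q < 1" and a: "0 < a"
  shows "cc Q a b * (1 - Q ^ (a + b)) = Q ^ b *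
     ((if 2 \<le> a then cc Q (a-1) b else 0) + (if 1 \<le> b then cc Q a (b-1) else 0)
      + (if a = 1 \<and> b = 0 then 1 else 0))"
proof (cases "2 \<le> a")
  case True
  show ?thesis
  proof (cases "1 \<le> b")
    case True
    thus ?thesis using cc_rec[OF Q \<open>2 \<le> a\<close> True] \<open>2 \<le> a\<close> by simp
  next
    case False
    hence "b = 0" by simp
    thus ?thesis using cc_rec_b0[OF Q \<open>2 \<le> a\<close>] \<open>2 \<le> a\<close> by simp
  qed
next
  case False
  hence a1: "a = 1" using a by simp
  show ?thesis
  proof (cases "1 \<le> b")
    case True
    thus ?thesis using cc_rec_a1[OF Q True] a1 by (simp add: add.commute)
  next
    case False
    hence "b = 0" by simp
    thus ?thesis using cc_rec_11[OF Q] a1 by simp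
  qed
qed

lemma Fh_zero: "m \<le> b \<Longrightarrow> 0 < a \<Longrightarrow> Fh Q a b m = 0"
  unfolding Fh_def by (cases "m < b") (auto simp: PR_zero)

lemma Fh_rec:
  assumes Q: "0 < Q" "Q < 1" and a: "0 < a"
  shows "Fh Q a b (Suc m) = Fh Q a b m
     + (if 2 \<le> a then Q ^ m * Fh Q (a-1) b (Suc m) else if b = 0 then Q ^ m else 0)
     + (if 1 \<le> b then Q ^ m * Fh Q a (b-1) m else 0)"
proof (cases "m < b")
  case True
  have z1: "Fh Q a b (Suc m) = 0" using Fh_zero[of "Suc m" b a Q] True a by simp
  have z2: "Fh Q a b m = 0" using Fh_zero[of m b a Q] True a by simp
  have z3: "2 \<le> a \<Longrightarrow> Fh Q (a-1) b (Suc m) = 0" using Fh_zero[of "Suc m" b "a-1" Q] True by simp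
  have z4: "1 \<le> b \<Longrightarrow> Fh Q a (b-1) m = 0" using Fh_zero[of m "b-1" a Q] True a by simp
  show ?thesis using z1 z2 z3 z4 True by simp
next
  case False
  hence mb: "b \<le> m" by simp
  define d where "d = m - b"
  have md: "m = d + b" unfolding d_def using mb by simp
  define P where "P = PR Q (Suc d) (m + a)"
  have L: "Fh Q a b (Suc m) = cc Q a b * (P * (1 - Q ^ (m + a)))"
  proof -
    have "Fh Q a b (Suc m) = cc Q a b * PR Q (Suc d) (Suc (m + a))"
      unfolding Fh_def using mb by (simp add: d_def Suc_diff_le)
    also have "PR Q (Suc d) (Suc (m + a)) = P * (1 - Q ^ (m + a))"
      unfolding P_def using a md by (intro PR_Suc_right) simp
    finally show ?thesis .
  qed
  have R1: "Fh Q a b m = cc Q a b * ((1 - Q ^ d) * P)"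
  proof -
    have "Fh Q a b m = cc Q a b * PR Q d (m + a)"
      unfolding Fh_def using mb by (simp add: d_def)
    also have "PR Q d (m + a) = (1 - Q ^ d) * P"
      unfolding P_def using a md by (intro PR_Suc_left) simp
    finally show ?thesis .
  qed
  have R2: "2 \<le> a \<Longrightarrow> Fh Q (a-1) b (Suc m) = cc Q (a-1) b * P"
    unfolding Fh_def P_def using mb by (simp add: d_def Suc_diff_le)
  have R3: "1 \<le> b \<Longrightarrow> Fh Q a (b-1) m = cc Q a (b-1) * P"
    unfolding Fh_def P_def using mb by (auto simp: d_def Suc_diff_le)
  have P1: "a = 1 \<Longrightarrow> b = 0 \<Longrightarrow> P = 1"
    unfolding P_def md by (simp add: PR_empty)
  define X where "X = (if 2 \<le> a then cc Q (a-1) b else 0) + (if 1 \<le> b then cc Q a (b-1) else 0)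
      + (if a = 1 \<and> b = 0 then 1 else 0)"
  have mid: "(if 2 \<le> a then Q ^ m * Fh Q (a-1) b (Suc m) else if b = 0 then Q ^ m else 0)
     + (if 1 \<le> b then Q ^ m * Fh Q a (b-1) m else 0) = Q ^ m * (X * P)"
    unfolding X_def using R2 R3 P1 a by (auto simp: algebra_simps)
  have key: "cc Q a b * (1 - Q ^ (a + b)) = Q ^ b * X"
    unfolding X_def by (rule cc_key[OF Q a])
  have "Fh Q a b m + Q ^ m * (X * P) = cc Q a b * ((1 - Q ^ d) * P) + Q ^ d * ((Q ^ b * X) * P)"
    unfolding R1 by (simp add: md power_add algebra_simps)
  also have "\<dots> = cc Q a b * ((1 - Q ^ d) * P) + Q ^ d * ((cc Q a b * (1 - Q ^ (a + b))) * P)"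
    unfolding key ..
  also have "\<dots> = cc Q a b * (P * (1 - Q ^ (d + (a + b))))"
    by (simp add: power_add algebra_simps)
  also have "d + (a + b) = m + a" unfolding md by simp
  finally show ?thesis unfolding L using mid by simp
qed

lemma spec_hk:
  assumes Q: "0 < Q" "Q < 1"
  shows "0 < a \<Longrightarrow> schur (hk a b) m (\<lambda>i. Q ^ i) = Fh Q a b m"
proof (induction m arbitrary: a b)
  case 0
  thus ?case using schur_hk_0 Fh_zero by simp
next
  case (Suc m)
  have ih: "\<And>a b. 0 < a \<Longrightarrow> schur (hk a b) m (\<lambda>i. Q ^ i) = Fh Q a b m" using Suc.IH by blast
  have main: "0 < a' \<Longrightarrow> schur (hk a' b') (Suc m) (\<lambda>i. Q ^ i) = Fh Q a' b' (Suc m)" for a' b'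
  proof (induction a' rule: nat_induct_non_zero)
    case 1
    show ?case using schur_hk_rec[of 1 b' m "\<lambda>i. Q ^ i"] Fh_rec[OF Q, of 1 b' m] ih[of 1 b'] ih[of 1 "b'-1"]
      by simp
  next
    case (Suc n)
    show ?case using schur_hk_rec[of "Suc n" b' m "\<lambda>i. Q ^ i"] Fh_rec[OF Q, of "Suc n" b' m]
      ih[of "Suc n" b'] ih[of "Suc n" "b'-1"] Suc
      by simp
  qed
  show ?case using main Suc.prems by blast
qed

lemma Fh_lim:
  assumes Q: "0 < Q" "Q < 1"
  shows "(\<lambda>m. Fh Q a b m) \<longlonglongrightarrow> cc Q a b"
proof (rule LIMSEQ_offset[where k = b])
  have eq: "Fh Q a b (n + b) = cc Q a b * (\<Prod>i<a + b. 1 - Q ^ (n + i))" for n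
  proof -
    have "Fh Q a b (n + b) = cc Q a b * PR Q n (n + (a + b))"
      unfolding Fh_def by (simp add: add.commute add.left_commute)
    thus ?thesis unfolding PR_shift .
  qed
  have "(\<lambda>n. cc Q a b * (\<Prod>i<a + b. 1 - Q ^ (n + i))) \<longlonglongrightarrow> cc Q a b * (\<Prod>i<a + b. 1 - 0)"
  proof (intro tendsto_mult tendsto_const tendsto_prod tendsto_diff)
    fix i
    have "(\<lambda>n. Q ^ n * Q ^ i) \<longlonglongrightarrow> 0 * Q ^ i"
      by (intro tendsto_mult tendsto_const LIMSEQ_realpow_zero) (use Q in auto)
    thus "(\<lambda>n. Q ^ (n + i)) \<longlonglongrightarrow> 0" by (simp add: power_add)
  qed
  thus "(\<lambda>n. Fh Q a b (n + b)) \<longlonglongrightarrow> cc Q a b" unfolding eq by simp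
qed

lemma pk_hooks:
  "1 \<le> k \<Longrightarrow> (\<Sum>r<k. (-1) ^ r * schur (hk (k - r) r) n x) = (\<Sum>i<n. x i ^ k)"
proof (induction n arbitrary: k)
  case 0
  thus ?case using schur_hk_0 by simp
next
  case (Suc n)
  have ihn: "\<And>k. 1 \<le> k \<Longrightarrow> (\<Sum>r<k. (-1) ^ r * schur (hk (k - r) r) n x) = (\<Sum>i<n. x i ^ k)"
    using Suc.IH by blast
  show ?case using \<open>1 \<le> k\<close>
  proof (induction k rule: nat_induct_at_least)
    case base
    show ?case using schur_hk_rec[of 1 0 n x] ihn[of 1] by simp
  next
    case (Suc k)
    have IHk: "(\<Sum>r<k. (-1) ^ r * schur (hk (k - r) r) (Suc n) x) = (\<Sum>i<Suc n. x i ^ k)"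
      using Suc by blast
    have kk: "1 \<le> k" using Suc by blast
    let ?S = "\<lambda>a b m. schur (hk a b) m x"
    have "(\<Sum>r<Suc k. (-1) ^ r * ?S (Suc k - r) r (Suc n))
       = (\<Sum>r<Suc k. (-1) ^ r * ?S (Suc k - r) r n)
       + (\<Sum>r<Suc k. (-1) ^ r * (if 2 \<le> Suc k - r then x n * ?S (k - r) r (Suc n) else if r = 0 then x n else 0))
       + (\<Sum>r<Suc k. (-1) ^ r * (if 1 \<le> r then x n * ?S (Suc k - r) (r - 1) n else 0))"
      (is "_ = ?T1 + ?T2 + ?T3")
    proof -
      have "(\<Sum>r<Suc k. (-1) ^ r * ?S (Suc k - r) r (Suc n))
        = (\<Sum>r<Suc k. (-1) ^ r * ?S (Suc k - r) r n
           + (-1) ^ r * (if 2 \<le> Suc k - r then x n * ?S (k - r) r (Suc n) else if r = 0 then x n else 0)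
           + (-1) ^ r * (if 1 \<le> r then x n * ?S (Suc k - r) (r - 1) n else 0))"
      proof (rule sum.cong)
        fix r assume "r \<in> {..<Suc k}"
        hence r: "0 < Suc k - r" by simp
        have e: "Suc k - r - 1 = k - r" by simp
        show "(-1) ^ r * ?S (Suc k - r) r (Suc n) = (-1) ^ r * ?S (Suc k - r) r n
           + (-1) ^ r * (if 2 \<le> Suc k - r then x n * ?S (k - r) r (Suc n) else if r = 0 then x n else 0)
           + (-1) ^ r * (if 1 \<le> r then x n * ?S (Suc k - r) (r - 1) n else 0)"
          unfolding schur_hk_rec[OF r, of r n x] e by (simp add: algebra_simps)
      qed simp
      thus ?thesis by (simp add: sum.distrib)
    qed
    also have "?T1 = (\<Sum>i<n. x i ^ Suc k)" using ihn[of "Suc k"] kk by simp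
    also have "?T2 = x n * (\<Sum>r<k. (-1) ^ r * ?S (k - r) r (Suc n))"
    proof -
      have "?T2 = (\<Sum>r<k. (-1) ^ r * (if 2 \<le> Suc k - r then x n * ?S (k - r) r (Suc n) else if r = 0 then x n else 0))"
        using kk by simp
      also have "\<dots> = (\<Sum>r<k. x n * ((-1) ^ r * ?S (k - r) r (Suc n)))"
        by (rule sum.cong) auto
      finally show ?thesis by (simp add: sum_distrib_left)
    qed
    also have "(\<Sum>r<k. (-1) ^ r * ?S (k - r) r (Suc n)) = (\<Sum>i<Suc n. x i ^ k)" by (rule IHk)
    also have "?T3 = - x n * (\<Sum>r<k. (-1) ^ r * ?S (k - r) r n)"
    proof -
      have "?T3 = (\<Sum>r<k. (-1) ^ Suc r * (x n * ?S (k - r) r n))"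
        by (subst sum.lessThan_Suc_shift) simp
      also have "\<dots> = - x n * (\<Sum>r<k. (-1) ^ r * ?S (k - r) r n)"
        by (simp add: sum_distrib_left mult.left_commute)
      finally show ?thesis .
    qed
    also have "(\<Sum>r<k. (-1) ^ r * ?S (k - r) r n) = (\<Sum>i<n. x i ^ k)" using ihn[of k] kk by simp
    finally show ?case by (simp add: algebra_simps)
  qed
qed


lemma len_le_sum: "(\<forall>x\<in>set xs. 0 < x) \<Longrightarrow> length xs \<le> sum_list (xs::nat list)"
  by (induction xs) auto

lemma part_len: "is_partition k lam \<Longrightarrow> length lam \<le> k"
  unfolding is_partition_def using len_le_sum by auto

lemma finite_partitions: "finite (partitions k)"
proof -
  have "partitions k \<subseteq> {xs. set xs \<subseteq> {..k} \<and> length xs \<le> k}"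
    unfolding partitions_def using part_len
    by (auto simp: is_partition_def dest: member_le_sum_list)
  thus ?thesis by (rule finite_subset) (rule finite_lists_length_le, simp)
qed

lemma cells_down:
  assumes "is_partition k lam" "(Suc i, j) \<in> cells lam"
  shows "(i, j) \<in> cells lam"
proof -
  have s: "sorted_wrt (\<ge>) lam" using assms(1) unfolding is_partition_def by simp
  have l: "Suc i < length lam" "j < lam ! Suc i" using assms(2) unfolding cells_def by auto
  have "lam ! Suc i \<le> lam ! i" using sorted_wrt_nth_less[OF s, of i "Suc i"] l by simp
  thus ?thesis using l unfolding cells_def by auto
qed

lemma cells_left: "(i, Suc j) \<in> cells lam \<Longrightarrow> (i, j) \<in> cells lam"
  unfolding cells_def by auto

lemma ssyt_ge:
  assumes "is_partition k lam" "T \<in> ssyt lam n"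
  shows "(i, j) \<in> cells lam \<Longrightarrow> i \<le> T (i, j)"
proof (induction i)
  case 0 thus ?case by simp
next
  case (Suc i)
  have c: "(i, j) \<in> cells lam" using cells_down[OF assms(1) Suc.prems] .
  have "T (i, j) < T (Suc i, j)" using assms(2) Suc.prems unfolding ssyt_def by auto
  thus ?case using Suc.IH[OF c] by simp
qed

definition T0 :: "nat list \<Rightarrow> nat \<times> nat \<Rightarrow> nat" where
  "T0 lam = restrict fst (cells lam)"

lemma T0_in:
  assumes "is_partition k lam" "k \<le> n"
  shows "T0 lam \<in> ssyt lam n"
proof -
  have pie: "T0 lam \<in> cells lam \<rightarrow>\<^sub>E {..<n}"
  proof (rule PiE_I)
    fix c assume "c \<in> cells lam"
    hence "fst c < length lam" unfolding cells_def by auto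
    thus "T0 lam c \<in> {..<n}" using part_len[OF assms(1)] assms(2) \<open>c \<in> cells lam\<close>
      unfolding T0_def by auto
  qed (simp add: T0_def)
  have row: "T0 lam (i, j) \<le> T0 lam (i, Suc j)" if "(i, Suc j) \<in> cells lam" for i j
    using cells_left[OF that] that unfolding T0_def by simp
  have col: "T0 lam (i, j) < T0 lam (Suc i, j)" if "(Suc i, j) \<in> cells lam" for i j
    using cells_down[OF assms(1) that] that unfolding T0_def by simp
  show ?thesis unfolding ssyt_def using pie row col by blast
qed

definition wB :: "nat \<Rightarrow> nat \<Rightarrow> nat" where
  "wB k i = (k + 1) ^ (k - 1 - i)"

definition wtn :: "nat \<Rightarrow> nat list \<Rightarrow> (nat \<times> nat \<Rightarrow> nat) \<Rightarrow> nat" where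
  "wtn k lam T = (\<Sum>c\<in>cells lam. wB k (T c))"

lemma wB_mono: "i \<le> i' \<Longrightarrow> wB k i' \<le> wB k i"
  unfolding wB_def by (rule power_increasing) auto

lemma wB_strict: "i < i' \<Longrightarrow> i' < k \<Longrightarrow> wB k i' < wB k i"
  unfolding wB_def by (rule power_strict_increasing) auto

lemma wtn_le:
  assumes "is_partition k lam" "T \<in> ssyt lam k"
  shows "wtn k lam T \<le> wtn k lam (T0 lam)"
    and "T \<noteq> T0 lam \<Longrightarrow> wtn k lam T < wtn k lam (T0 lam)"
proof -
  have le: "wB k (T c) \<le> wB k (T0 lam c)" if "c \<in> cells lam" for c
  proof -
    obtain i j where c: "c = (i, j)" by (cases c)
    have "i \<le> T (i,j)" using ssyt_ge[OF assms] that c by simp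
    thus ?thesis using that c unfolding T0_def by (simp add: wB_mono)
  qed
  thus "wtn k lam T \<le> wtn k lam (T0 lam)" unfolding wtn_def by (intro sum_mono) auto
  assume ne: "T \<noteq> T0 lam"
  have "\<exists>c\<in>cells lam. T c \<noteq> T0 lam c"
  proof (rule ccontr)
    assume "\<not> ?thesis"
    hence "T c = T0 lam c" for c
      using ssyt_ext[OF assms(2), of c] by (cases "c \<in> cells lam") (auto simp: T0_def)
    thus False using ne by auto
  qed
  then obtain c where c: "c \<in> cells lam" "T c \<noteq> T0 lam c" by blast
  obtain i j where cij: "c = (i, j)" by (cases c)
  have "i \<le> T (i,j)" using ssyt_ge[OF assms] c cij by simp
  moreover have "T (i,j) < k" using ssyt_val[OF assms(2)] c cij by simp
  ultimately have "wB k (T c) < wB k (T0 lam c)" using c cij unfolding T0_def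
    by (simp add: wB_strict)
  thus "wtn k lam T < wtn k lam (T0 lam)" unfolding wtn_def
    by (intro sum_strict_mono_ex1) (use le c finite_cells in auto)
qed

definition pd :: "nat list \<Rightarrow> nat \<Rightarrow> nat" where
  "pd lam i = (if i < length lam then lam ! i else 0)"

lemma wtn_T0:
  assumes "is_partition k lam"
  shows "wtn k lam (T0 lam) = (\<Sum>i<k. pd lam i * (k + 1) ^ (k - 1 - i))"
proof -
  have cs: "cells lam = (SIGMA i:{..<length lam}. {..<lam ! i})" unfolding cells_def by auto
  have "wtn k lam (T0 lam) = (\<Sum>c\<in>cells lam. wB k (fst c))"
    unfolding wtn_def T0_def by (rule sum.cong) auto
  also have "\<dots> = (\<Sum>i<length lam. \<Sum>j<lam ! i. wB k i)"
    unfolding cs by (subst sum.Sigma) (auto simp: split_def)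
  also have "\<dots> = (\<Sum>i<length lam. pd lam i * wB k i)"
    by (rule sum.cong) (auto simp: pd_def)
  also have "\<dots> = (\<Sum>i<k. pd lam i * wB k i)"
    using part_len[OF assms] by (intro sum.mono_neutral_left) (auto simp: pd_def)
  finally show ?thesis unfolding wB_def .
qed

lemma digits_lt:
  "(\<And>i. i < K \<Longrightarrow> p i < B) \<Longrightarrow> (\<Sum>i<K. p i * B ^ (K - 1 - i)) < (B::nat) ^ K"
proof (induction K arbitrary: p)
  case 0 thus ?case by simp
next
  case (Suc K)
  have "(\<Sum>i<Suc K. p i * B ^ (Suc K - 1 - i)) = p 0 * B ^ K + (\<Sum>i<K. p (Suc i) * B ^ (K - 1 - i))"
    by (subst sum.lessThan_Suc_shift) simp
  also have "(\<Sum>i<K. p (Suc i) * B ^ (K - 1 - i)) < B ^ K" using Suc.IH[of "\<lambda>i. p (Suc i)"] Suc.prems by simp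
  hence "p 0 * B ^ K + (\<Sum>i<K. p (Suc i) * B ^ (K - 1 - i)) < p 0 * B ^ K + B ^ K" by simp
  also have "\<dots> = (p 0 + 1) * B ^ K" by simp
  also have "\<dots> \<le> B * B ^ K" using Suc.prems[of 0] by (intro mult_right_mono) auto
  finally show ?case by simp
qed

lemma digits_inj:
  "(\<And>i. i < K \<Longrightarrow> p i < B) \<Longrightarrow> (\<And>i. i < K \<Longrightarrow> q i < B) \<Longrightarrow>
   (\<Sum>i<K. p i * B ^ (K - 1 - i)) = (\<Sum>i<K. q i * (B::nat) ^ (K - 1 - i)) \<Longrightarrow> i < K \<Longrightarrow> p i = q i"
proof (induction K arbitrary: p q i)
  case 0 thus ?case by simp
next
  case (Suc K)
  define x where "x = (\<Sum>i<K. p (Suc i) * B ^ (K - 1 - i))"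
  define y where "y = (\<Sum>i<K. q (Suc i) * B ^ (K - 1 - i))"
  have ex: "(\<Sum>i<Suc K. p i * B ^ (Suc K - 1 - i)) = x + p 0 * B ^ K"
    unfolding x_def by (subst sum.lessThan_Suc_shift) simp
  have ey: "(\<Sum>i<Suc K. q i * B ^ (Suc K - 1 - i)) = y + q 0 * B ^ K"
    unfolding y_def by (subst sum.lessThan_Suc_shift) simp
  have xl: "x < B ^ K" unfolding x_def using digits_lt[of K "\<lambda>i. p (Suc i)" B] Suc.prems(1) by simp
  have yl: "y < B ^ K" unfolding y_def using digits_lt[of K "\<lambda>i. q (Suc i)" B] Suc.prems(2) by simp
  have Bp: "B ^ K \<noteq> 0" using xl by (metis gr_implies_not0)
  have eq: "x + p 0 * B ^ K = y + q 0 * B ^ K" using Suc.prems(3) ex ey by simp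
  have "(x + p 0 * B ^ K) div B ^ K = (y + q 0 * B ^ K) div B ^ K" using eq by simp
  hence p0: "p 0 = q 0" using xl yl Bp by simp
  have "(x + p 0 * B ^ K) mod B ^ K = (y + q 0 * B ^ K) mod B ^ K" using eq by simp
  hence xy: "x = y" using xl yl Bp by simp
  show ?case
  proof (cases i)
    case 0 thus ?thesis using p0 by simp
  next
    case (Suc i')
    have "p (Suc i') = q (Suc i')"
      using Suc.IH[of "\<lambda>i. p (Suc i)" "\<lambda>i. q (Suc i)" i'] Suc.prems xy Suc
      unfolding x_def y_def by simp
    thus ?thesis using Suc by simp
  qed
qed

lemma pd_inj:
  assumes "is_partition k lam" "is_partition k mu" "\<And>i. i < k \<Longrightarrow> pd lam i = pd mu i"
  shows "lam = mu"
proof -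
  have pl: "\<forall>x\<in>set lam. 0 < x" "\<forall>x\<in>set mu. 0 < x" using assms(1,2) unfolding is_partition_def by auto
  have ll: "length lam \<le> k" "length mu \<le> k" using part_len assms(1,2) by auto
  have len: "length lam = length mu"
  proof (rule ccontr)
    assume ne: "length lam \<noteq> length mu"
    show False
    proof (cases "length lam < length mu")
      case True
      have "pd lam (length lam) = 0" by (simp add: pd_def)
      moreover have "pd mu (length lam) = mu ! length lam" using True by (simp add: pd_def)
      moreover have "0 < mu ! length lam" using pl(2) True by simp
      ultimately show False using assms(3)[of "length lam"] True ll by simp
    next
      case False
      hence True: "length mu < length lam" using ne by simp
      have "pd mu (length mu) = 0" by (simp add: pd_def)
      moreover have "pd lam (length mu) = lam ! length mu" using True by (simp add: pd_def)
      moreover have "0 < lam ! length mu" using pl(1) True by simp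
      ultimately show False using assms(3)[of "length mu"] True ll by simp
    qed
  qed
  show ?thesis
  proof (rule nth_equalityI[OF len])
    fix i assume "i < length lam"
    thus "lam ! i = mu ! i" using assms(3)[of i] ll len by (simp add: pd_def)
  qed
qed

lemma wtn_inj:
  assumes "is_partition k lam" "is_partition k mu" "wtn k lam (T0 lam) = wtn k mu (T0 mu)"
  shows "lam = mu"
proof (rule pd_inj[OF assms(1,2)])
  have b: "pd nu i < k + 1" if "is_partition k nu" for nu i
  proof (cases "i < length nu")
    case True
    hence "nu ! i \<le> sum_list nu" by (rule elem_le_sum_list)
    thus ?thesis using that True unfolding pd_def is_partition_def by simp
  qed (simp add: pd_def)
  fix i assume "i < k"
  thus "pd lam i = pd mu i"
    using digits_inj[of k "pd lam" "k+1" "pd mu" i] b[OF assms(1)] b[OF assms(2)] assms(3)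
    unfolding wtn_T0[OF assms(1)] wtn_T0[OF assms(2)] by blast
qed


lemma pow_ratio_lim:
  assumes "w \<le> E"
  shows "((\<lambda>t::real. t ^ w / t ^ E) \<longlongrightarrow> (if w = E then 1 else 0)) at_top"
proof -
  have ev: "eventually (\<lambda>t::real. inverse t ^ (E - w) = t ^ w / t ^ E) at_top"
    using eventually_gt_at_top[of "0::real"]
  proof (rule eventually_mono)
    fix t :: real assume t: "0 < t"
    have "t ^ E = t ^ w * t ^ (E - w)" using assms by (simp add: power_add[symmetric])
    thus "inverse t ^ (E - w) = t ^ w / t ^ E" using t by (simp add: power_inverse field_simps)
  qed
  have "((\<lambda>t::real. inverse t ^ (E - w)) \<longlongrightarrow> 0 ^ (E - w)) at_top"
    by (intro tendsto_power tendsto_inverse_0_at_top filterlim_ident)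
  moreover have "(0::real) ^ (E - w) = (if w = E then 1 else 0)" using assms by auto
  ultimately show ?thesis using tendsto_cong[OF ev] by simp
qed

lemma schur_indep:
  assumes k: "1 \<le> k" and out: "\<forall>lam. lam \<notin> partitions k \<longrightarrow> d lam = 0"
    and zero: "\<forall>n x. (\<Sum>lam\<in>partitions k. d lam * schur lam n x) = 0"
  shows "d lam = (0::real)"
proof (rule ccontr)
  assume dl: "d lam \<noteq> 0"
  define P where "P = partitions k"
  define S where "S = {mu\<in>P. d mu \<noteq> 0}"
  have finP: "finite P" unfolding P_def by (rule finite_partitions)
  have finS: "finite S" unfolding S_def using finP by simp
  have lS: "lam \<in> S" using dl out unfolding S_def P_def by auto
  define V where "V mu = wtn k mu (T0 mu)" for mu
  define E where "E = Max (V ` S)"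
  have "E \<in> V ` S" unfolding E_def using finS lS by (intro Max_in) auto
  then obtain ls where ls: "ls \<in> S" "V ls = E" by auto
  have VE: "V mu \<le> E" if "mu \<in> S" for mu unfolding E_def using finS that by (intro Max_ge) auto
  have ispart: "is_partition k mu" if "mu \<in> S" for mu using that unfolding S_def P_def partitions_def by simp
  have wle: "wtn k mu T \<le> E" if "mu \<in> S" "T \<in> ssyt mu k" for mu T
    using wtn_le(1)[OF ispart[OF that(1)] that(2)] VE[OF that(1)] unfolding V_def by simp
  have weq: "mu = ls \<and> T = T0 ls" if "mu \<in> S" "T \<in> ssyt mu k" "wtn k mu T = E" for mu T
  proof -
    have "T = T0 mu"
    proof (rule ccontr)
      assume "T \<noteq> T0 mu"
      from wtn_le(2)[OF ispart[OF that(1)] that(2) this] VE[OF that(1)] that(3) show False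
        unfolding V_def by simp
    qed
    moreover have "V mu = E" using wle[OF that(1,2)] VE[OF that(1)] that(3) \<open>T = T0 mu\<close>
      unfolding V_def by simp
    hence "mu = ls" using wtn_inj[OF ispart[OF that(1)] ispart[OF ls(1)]] ls(2) unfolding V_def by simp
    ultimately show ?thesis by simp
  qed
  define phi where "phi mu t = d mu * (\<Sum>T\<in>ssyt mu k. t ^ wtn k mu T / t ^ E)" for mu and t :: real
  have sch: "schur mu k (\<lambda>i. t ^ wB k i) = (\<Sum>T\<in>ssyt mu k. t ^ wtn k mu T)" for mu and t :: real
    unfolding schur_def wtn_def by (simp add: power_sum)
  have eq0: "(\<Sum>mu\<in>P. phi mu t) = 0" if "0 < t" for t :: real
  proof -
    have "(\<Sum>mu\<in>P. phi mu t) = (\<Sum>mu\<in>P. d mu * schur mu k (\<lambda>i. t ^ wB k i) / t ^ E)"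
    proof (rule sum.cong[OF refl])
      fix mu
      have "(\<Sum>T\<in>ssyt mu k. t ^ wtn k mu T / t ^ E) = (\<Sum>T\<in>ssyt mu k. t ^ wtn k mu T) / t ^ E"
        by (rule sum_divide_distrib[symmetric])
      thus "phi mu t = d mu * schur mu k (\<lambda>i. t ^ wB k i) / t ^ E"
        unfolding phi_def sch by simp
    qed
    also have "\<dots> = (\<Sum>mu\<in>P. d mu * schur mu k (\<lambda>i. t ^ wB k i)) / t ^ E"
      by (rule sum_divide_distrib[symmetric])
    also have "\<dots> = 0" using zero unfolding P_def by simp
    finally show ?thesis .
  qed
  have lim1: "(phi mu \<longlongrightarrow> (if mu = ls then d ls else 0)) at_top" if "mu \<in> P" for mu
  proof (cases "d mu = 0")
    case True
    hence "phi mu = (\<lambda>t. 0)" unfolding phi_def by auto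
    moreover have "mu \<noteq> ls" using True ls(1) unfolding S_def by auto
    ultimately show ?thesis by simp
  next
    case False
    hence mS: "mu \<in> S" using that unfolding S_def by simp
    have "((\<lambda>t::real. \<Sum>T\<in>ssyt mu k. t ^ wtn k mu T / t ^ E) \<longlongrightarrow>
           (\<Sum>T\<in>ssyt mu k. if wtn k mu T = E then 1 else 0)) at_top"
      by (intro tendsto_sum pow_ratio_lim wle[OF mS])
    moreover have "(\<Sum>T\<in>ssyt mu k. if wtn k mu T = E then 1 else (0::real)) = (if mu = ls then 1 else 0)"
    proof (cases "mu = ls")
      case True
      have T0in: "T0 ls \<in> ssyt ls k" using T0_in[OF ispart[OF ls(1)]] by simp
      have iff: "wtn k ls T = E \<longleftrightarrow> T = T0 ls" if "T \<in> ssyt ls k" for T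
      proof
        assume "wtn k ls T = E"
        from weq[OF ls(1) that this] show "T = T0 ls" by simp
      next
        assume "T = T0 ls"
        thus "wtn k ls T = E" using ls(2) unfolding V_def by simp
      qed
      have "(\<Sum>T\<in>ssyt mu k. if wtn k mu T = E then 1 else (0::real)) = (\<Sum>T\<in>ssyt ls k. if T = T0 ls then 1 else 0)"
        unfolding True by (rule sum.cong[OF refl]) (simp add: iff)
      also have "\<dots> = 1" using T0in finite_ssyt by simp
      finally show ?thesis using True by simp
    next
      case False
      have "(\<Sum>T\<in>ssyt mu k. if wtn k mu T = E then 1 else (0::real)) = 0"
      proof (rule sum.neutral, rule ballI)
        fix T assume T: "T \<in> ssyt mu k"
        have "wtn k mu T \<noteq> E"
        proof
          assume "wtn k mu T = E"
          from weq[OF mS T this] False show False by simp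
        qed
        thus "(if wtn k mu T = E then 1 else (0::real)) = 0" by simp
      qed
      thus ?thesis using False by simp
    qed
    ultimately have "((\<lambda>t::real. \<Sum>T\<in>ssyt mu k. t ^ wtn k mu T / t ^ E) \<longlongrightarrow> (if mu = ls then 1 else 0)) at_top"
      by simp
    hence "((\<lambda>t::real. d mu * (\<Sum>T\<in>ssyt mu k. t ^ wtn k mu T / t ^ E)) \<longlongrightarrow> d mu * (if mu = ls then 1 else 0)) at_top"
      by (rule tendsto_mult_left)
    moreover have "d mu * (if mu = ls then 1 else 0) = (if mu = ls then d ls else 0)" by simp
    ultimately show ?thesis unfolding phi_def by simp
  qed
  have L0: "((\<lambda>t. \<Sum>mu\<in>P. phi mu t) \<longlongrightarrow> (\<Sum>mu\<in>P. if mu = ls then d ls else 0)) at_top"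
    by (rule tendsto_sum) (rule lim1)
  have sd: "(\<Sum>mu\<in>P. if mu = ls then d ls else 0) = d ls" using ls(1) finP unfolding S_def by simp
  have L: "((\<lambda>t. \<Sum>mu\<in>P. phi mu t) \<longlongrightarrow> d ls) at_top" using L0 unfolding sd .
  have ev: "eventually (\<lambda>t. (\<Sum>mu\<in>P. phi mu t) = 0) at_top"
    using eventually_gt_at_top[of "0::real"] by (rule eventually_mono) (rule eq0)
  have "((\<lambda>t::real. 0::real) \<longlongrightarrow> d ls) at_top"
    using tendsto_cong[OF ev, of "d ls"] L by simp
  hence "d ls = 0" by (simp add: tendsto_const_iff)
  thus False using ls(1) unfolding S_def by simp
qed


definition c0 :: "nat \<Rightarrow> nat list \<Rightarrow> real" where
  "c0 k lam = (\<Sum>r<k. if lam = hk (k - r) r then (-1) ^ r else 0)"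

lemma sorted_rep1: "sorted_wrt (\<ge>) (replicate r (1::nat))"
  by (induction r) auto

lemma hk_part: "r < k \<Longrightarrow> hk (k - r) r \<in> partitions k"
  unfolding partitions_def is_partition_def hk_def using sorted_rep1[of r] by (auto simp: sum_list_replicate)

lemma c0_sum: "(\<Sum>lam\<in>partitions k. c0 k lam * f lam) = (\<Sum>r<k. (-1) ^ r * f (hk (k - r) r))"
proof -
  have "(\<Sum>lam\<in>partitions k. c0 k lam * f lam) =
        (\<Sum>lam\<in>partitions k. \<Sum>r<k. if lam = hk (k - r) r then (-1) ^ r * f lam else 0)"
    unfolding c0_def sum_distrib_right by (intro sum.cong) auto
  also have "\<dots> = (\<Sum>r<k. \<Sum>lam\<in>partitions k. if lam = hk (k - r) r then (-1) ^ r * f lam else 0)"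
    by (rule sum.swap)
  also have "\<dots> = (\<Sum>r<k. (-1) ^ r * f (hk (k - r) r))"
    using hk_part finite_partitions by (intro sum.cong) (auto simp: sum.delta')
  finally show ?thesis .
qed

lemma c0_out: "lam \<notin> partitions k \<Longrightarrow> c0 k lam = 0"
  unfolding c0_def using hk_part by (intro sum.neutral) auto

lemma chi_cycle_eq:
  assumes k: "1 \<le> k"
  shows "chi_cycle k = c0 k"
  unfolding chi_cycle_def
proof (rule the_equality)
  show "(\<forall>lam. lam \<notin> partitions k \<longrightarrow> c0 k lam = 0) \<and>
    (\<forall>n (x :: nat \<Rightarrow> real). (\<Sum>i<n. x i ^ k) = (\<Sum>lam\<in>partitions k. c0 k lam * schur lam n x))"
    using c0_out c0_sum pk_hooks[OF k] by simp
next
  fix c assume c: "(\<forall>lam. lam \<notin> partitions k \<longrightarrow> c lam = 0) \<and>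
    (\<forall>n (x :: nat \<Rightarrow> real). (\<Sum>i<n. x i ^ k) = (\<Sum>lam\<in>partitions k. c lam * schur lam n x))"
  show "c = c0 k"
  proof
    fix lam
    have "(\<lambda>lam. c lam - c0 k lam) lam = 0"
    proof (rule schur_indep[OF k])
      show "\<forall>lam. lam \<notin> partitions k \<longrightarrow> c lam - c0 k lam = 0" using c c0_out by simp
      show "\<forall>n x. (\<Sum>lam\<in>partitions k. (c lam - c0 k lam) * schur lam n x) = 0"
      proof (intro allI)
        fix n x
        have "(\<Sum>lam\<in>partitions k. (c lam - c0 k lam) * schur lam n x)
            = (\<Sum>lam\<in>partitions k. c lam * schur lam n x) - (\<Sum>lam\<in>partitions k. c0 k lam * schur lam n x)"
          by (simp add: left_diff_distrib sum_subtractf)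
        also have "\<dots> = 0" using c c0_sum pk_hooks[OF k] by simp
        finally show "(\<Sum>lam\<in>partitions k. (c lam - c0 k lam) * schur lam n x) = 0" .
      qed
    qed
    thus "c lam = c0 k lam" by simp
  qed
qed


lemma algF: fixes x y :: real assumes "x \<noteq> 0" "y \<noteq> 0" "x * y \<noteq> 1"
  shows "1 - inverse x = (y * (1 - x) / (1 - x * y)) * (1 - inverse (x * y))"
proof -
  have "1 - x * y \<noteq> 0" using assms(3) by simp
  thus ?thesis using assms by (simp add: field_simps)
qed

lemma algR2: fixes x w :: real assumes "x \<noteq> 0" shows "(1 - inverse x) * (x * w) = - ((1 - x) * w)"
  using assms by (simp add: field_simps)

lemma algT:
  fixes s Tq Bk K Y1 B1 W1 Y2 B2 W2 R Z1 Z2 A D A1 A2 A3 X1 X2 C z :: real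
  assumes nz: "K \<noteq> 0" "B1 \<noteq> 0" "W1 \<noteq> 0" "B2 \<noteq> 0" "W2 \<noteq> 0" "R \<noteq> 0" "A \<noteq> 0" "D \<noteq> 0"
     "Y1 \<noteq> 0" "Y2 \<noteq> 0" "Bk \<noteq> 0" "s \<noteq> 0"
  and h1: "A1 * K = s * Tq * Bk" and h2: "A2 = K * Y1 / W1 * B1" and h3: "A3 = K * Y2 / W2 * B2"
  and hz: "z = inverse K"
  and I1: "X1 * Y1 = Z1 * W1" and I2: "X2 * Y2 = Z2 * W2" and I3: "C = A * Bk * D"
  shows "s * ((Tq / (D * A * R)) * Z1 * ((Tq / (D * A * R)) * Z2) / (Tq / (D * A * R)))
     = X1 * X2 / C * (A1 * A2 * A3 / (B1 * B2 * R) * z)"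
proof (cases "Tq = 0")
  case True
  hence "A1 = 0" using h1 nz by simp
  thus ?thesis using True by simp
next
  case False
  define c where "c = Tq / (D * A * R)"
  have c0: "c \<noteq> 0" unfolding c_def using False nz by simp
  have L: "s * (c * Z1 * (c * Z2) / c) = s * c * Z1 * Z2" using c0 by simp
  have a1: "A1 = s * Tq * Bk * inverse K" using h1 nz by (simp add: field_simps)
  have x1: "X1 = Z1 * W1 * inverse Y1" using I1 nz by (simp add: field_simps)
  have x2: "X2 = Z2 * W2 * inverse Y2" using I2 nz by (simp add: field_simps)
  have P1: "A1 * A2 * A3 / (B1 * B2 * R) * z = s * Tq * Bk * Y1 * Y2 * inverse (W1 * W2 * R)"
  proof -
    have "A1 * A2 * A3 / (B1 * B2 * R) * z
       = s * Tq * Bk * Y1 * Y2 * inverse (W1 * W2 * R) * ((K * inverse K) * (K * inverse K) * (B1 * inverse B1) * (B2 * inverse B2))"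
      unfolding a1 h2 h3 hz by (simp add: divide_inverse inverse_mult_distrib mult_ac)
    also have "\<dots> = s * Tq * Bk * Y1 * Y2 * inverse (W1 * W2 * R)" using nz by simp
    finally show ?thesis .
  qed
  have P2: "X1 * X2 / C * (s * Tq * Bk * Y1 * Y2 * inverse (W1 * W2 * R)) = s * c * Z1 * Z2"
  proof -
    have "X1 * X2 / C * (s * Tq * Bk * Y1 * Y2 * inverse (W1 * W2 * R))
       = s * (Tq * inverse (D * A * R)) * Z1 * Z2 * ((W1 * inverse W1) * (W2 * inverse W2) * (Y1 * inverse Y1) * (Y2 * inverse Y2) * (Bk * inverse Bk))"
      unfolding x1 x2 I3 by (simp add: divide_inverse inverse_mult_distrib mult_ac)
    also have "\<dots> = s * c * Z1 * Z2" using nz unfolding c_def by (simp add: divide_inverse)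
    finally show ?thesis .
  qed
  show ?thesis unfolding c_def[symmetric] L P1 P2 ..
qed



lemma powi2: "(q::real) powi (2 * int r) = (q ^ 2) ^ r"
proof -
  have "(q powi 2) ^ r = q powi (2 * int r)" by (rule power_int_power')
  thus ?thesis by simp
qed

lemma pq:
  assumes q: "(q::real) \<noteq> 0" and r: "Suc r \<le> n"
  shows "q powi (2 - 2 * int n) * (q ^ 2) ^ r = inverse ((q ^ 2) ^ (n - Suc r))"
proof -
  have e1: "(q ^ 2) ^ r = q powi (2 * int r)" by (rule powi2[symmetric])
  have e2: "q powi (2 - 2 * int n + 2 * int r) = q powi (2 - 2 * int n) * q powi (2 * int r)"
    by (rule power_int_add) (use q in simp)
  have e3: "2 - 2 * int n + 2 * int r = - (2 * int (n - Suc r))" using r by simp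
  have e4: "q powi (- (2 * int (n - Suc r))) = inverse ((q ^ 2) ^ (n - Suc r))"
    unfolding power_int_minus powi2 ..
  have "q powi (2 - 2 * int n) * (q ^ 2) ^ r = q powi (2 - 2 * int n + 2 * int r)"
    unfolding e1 e2 ..
  also have "\<dots> = q powi (- (2 * int (n - Suc r)))" unfolding e3 ..
  also have "\<dots> = inverse ((q ^ 2) ^ (n - Suc r))" by (rule e4)
  finally show ?thesis .
qed

lemma qpoch_Suc: "qpoch a p (Suc r) = qpoch a p r * (1 - a * p ^ r)"
  unfolding qpoch_def by simp

lemma qpoch_PR: "qpoch ((q ^ 2) ^ s) (q ^ 2) n = PR (q ^ 2) s (s + n)"
  unfolding qpoch_def PR_shift by (simp add: power_add)



lemma R1:
  assumes q: "0 < q" "q < 1" and k: "1 \<le> k"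
  shows "r \<le> n \<Longrightarrow> qpoch (q powi (2 - 2 * int n)) (q ^ 2) r =
     (q ^ 2) ^ (k * r) * PR (q ^ 2) (n - r) n / PR (q ^ 2) (n + k - r) (n + k)
       * qpoch (q powi (2 - 2 * int (n + k))) (q ^ 2) r"
proof (induction r)
  case 0 thus ?case by (simp add: qpoch_def PR_empty)
next
  case (Suc r)
  define Q where "Q = q ^ 2"
  have Q: "0 < Q" "Q < 1" unfolding Q_def using q by (auto simp: power_less_one_iff)
  define j where "j = n - Suc r"
  have jn: "j < n" "Suc j = n - r" "j + k = n + k - Suc r" "Suc (j + k) = n + k - r"
    using Suc.prems k unfolding j_def by auto
  have f: "1 - q powi (2 - 2 * int n) * Q ^ r = 1 - inverse (Q ^ j)"
  proof -
    have "q powi (2 - 2 * int n) * Q ^ r = inverse (Q ^ (n - Suc r))"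
      unfolding Q_def by (rule pq) (use Suc.prems q in auto)
    thus ?thesis unfolding j_def by simp
  qed
  have g: "1 - q powi (2 - 2 * int (n + k)) * Q ^ r = 1 - inverse (Q ^ j * Q ^ k)"
  proof -
    have "q powi (2 - 2 * int (n + k)) * Q ^ r = inverse (Q ^ (n + k - Suc r))"
      unfolding Q_def by (rule pq) (use Suc.prems q in auto)
    also have "n + k - Suc r = j + k" using jn by simp
    finally show ?thesis by (simp add: power_add)
  qed
  have nz: "Q ^ j \<noteq> 0" "Q ^ k \<noteq> 0" using Q by auto
  have ne1: "Q ^ j * Q ^ k \<noteq> 1"
  proof -
    have "Q ^ (j + k) < 1" using pow_lt1[OF Q] k by simp
    thus ?thesis by (simp add: power_add)
  qed
  have fg: "1 - inverse (Q ^ j) = (Q ^ k * (1 - Q ^ j) / (1 - Q ^ j * Q ^ k)) * (1 - inverse (Q ^ j * Q ^ k))"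
    by (rule algF[OF nz ne1])
  define c where "c = Q ^ (k * r) * PR Q (n - r) n / PR Q (n + k - r) (n + k)"
  have IH: "qpoch (q powi (2 - 2 * int n)) Q r = c * qpoch (q powi (2 - 2 * int (n + k))) Q r"
    using Suc unfolding c_def Q_def by simp
  have P1: "PR Q j n = (1 - Q ^ j) * PR Q (n - r) n" using PR_Suc_left[of j n Q] jn by simp
  have P2: "PR Q (j + k) (n + k) = (1 - Q ^ j * Q ^ k) * PR Q (n + k - r) (n + k)"
  proof -
    have "PR Q (j + k) (n + k) = (1 - Q ^ (j + k)) * PR Q (Suc (j + k)) (n + k)"
      by (rule PR_Suc_left) (use jn in simp)
    also have "Suc (j + k) = n + k - r" using jn by simp
    finally show ?thesis by (simp add: power_add)
  qed
  have cc': "c * (Q ^ k * (1 - Q ^ j) / (1 - Q ^ j * Q ^ k)) = Q ^ (k * Suc r) * PR Q j n / PR Q (j + k) (n + k)"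
    unfolding c_def P1 P2 by (simp add: power_add algebra_simps)
  have "qpoch (q powi (2 - 2 * int n)) Q (Suc r)
      = c * qpoch (q powi (2 - 2 * int (n + k))) Q r * (1 - inverse (Q ^ j))"
    unfolding qpoch_Suc IH f[unfolded Q_def[symmetric]] ..
  also have "\<dots> = (c * (Q ^ k * (1 - Q ^ j) / (1 - Q ^ j * Q ^ k))) *
      (qpoch (q powi (2 - 2 * int (n + k))) Q r * (1 - inverse (Q ^ j * Q ^ k)))"
    unfolding fg by (simp add: ac_simps)
  also have "\<dots> = Q ^ (k * Suc r) * PR Q j n / PR Q (j + k) (n + k) * qpoch (q powi (2 - 2 * int (n + k))) Q (Suc r)"
    unfolding cc' qpoch_Suc g[unfolded Q_def[symmetric]] ..
  finally show ?case unfolding Q_def j_def using jn(3) unfolding j_def by simp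
qed



lemma tri_Suc: "Suc r * (Suc r + 1) div 2 = r * (r + 1) div 2 + Suc r"
proof -
  have h: "Suc r * (Suc r + 1) = r * (r + 1) + 2 * Suc r" by (simp add: algebra_simps)
  have g: "\<And>x y::nat. (x + 2 * y) div 2 = x div 2 + y" by presburger
  show ?thesis unfolding h g ..
qed

lemma swap4: "(a::real) * b * (c * d) = (a * c) * (b * d)" by (simp add: mult_ac)
lemma rearr5: "((s::real) * t * P) * (- (y * u)) = (- s) * (t * u) * (y * P)" by (simp add: mult_ac)

lemma R2:
  assumes q: "0 < q" "q < 1"
  shows "r \<le> k \<Longrightarrow> qpoch (q powi (2 - 2 * int k)) (q ^ 2) r * (q ^ 2) ^ (k * r) =
     (-1) ^ r * (q ^ 2) ^ (r * (r + 1) div 2) * PR (q ^ 2) (k - r) k"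
proof (induction r)
  case 0 thus ?case by (simp add: qpoch_def PR_empty)
next
  case (Suc r)
  have Q: "0 < q ^ 2" "q ^ 2 < 1" using q by (auto simp: power_less_one_iff)
  define j where "j = k - Suc r"
  have jk: "j < k" "Suc j = k - r" "k = j + Suc r" using Suc.prems unfolding j_def by auto
  have f: "1 - q powi (2 - 2 * int k) * (q ^ 2) ^ r = 1 - inverse ((q ^ 2) ^ j)"
  proof -
    have "q powi (2 - 2 * int k) * (q ^ 2) ^ r = inverse ((q ^ 2) ^ (k - Suc r))"
      by (rule pq) (use Suc.prems q in auto)
    thus ?thesis unfolding j_def by simp
  qed
  have IH: "qpoch (q powi (2 - 2 * int k)) (q ^ 2) r * (q ^ 2) ^ (k * r) =
      (-1) ^ r * (q ^ 2) ^ (r * (r + 1) div 2) * PR (q ^ 2) (k - r) k"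
    using Suc by simp
  have nz: "(q ^ 2) ^ j \<noteq> 0" using Q by auto
  have qk: "(q ^ 2) ^ k = (q ^ 2) ^ j * (q ^ 2) ^ Suc r" using jk(3) by (simp add: power_add)
  have fk: "(1 - inverse ((q ^ 2) ^ j)) * (q ^ 2) ^ k = - ((1 - (q ^ 2) ^ j) * (q ^ 2) ^ Suc r)"
    unfolding qk by (rule algR2[OF nz])
  have P1: "PR (q ^ 2) j k = (1 - (q ^ 2) ^ j) * PR (q ^ 2) (k - r) k"
    using PR_Suc_left[of j k "q ^ 2"] jk(1,2) by simp
  have kr: "k * Suc r = k * r + k" by simp
  have pk: "(q ^ 2) ^ (k * Suc r) = (q ^ 2) ^ (k * r) * (q ^ 2) ^ k"
    unfolding kr power_add ..
  have "qpoch (q powi (2 - 2 * int k)) (q ^ 2) (Suc r) * (q ^ 2) ^ (k * Suc r)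
      = (qpoch (q powi (2 - 2 * int k)) (q ^ 2) r * (1 - inverse ((q ^ 2) ^ j))) * ((q ^ 2) ^ (k * r) * (q ^ 2) ^ k)"
    unfolding qpoch_Suc f pk ..
  also have "\<dots> = (qpoch (q powi (2 - 2 * int k)) (q ^ 2) r * (q ^ 2) ^ (k * r)) * ((1 - inverse ((q ^ 2) ^ j)) * (q ^ 2) ^ k)"
    by (rule swap4)
  also have "\<dots> = ((-1) ^ r * (q ^ 2) ^ (r * (r + 1) div 2) * PR (q ^ 2) (k - r) k) * (- ((1 - (q ^ 2) ^ j) * (q ^ 2) ^ Suc r))"
    unfolding IH fk ..
  also have "\<dots> = (- ((-1) ^ r)) * ((q ^ 2) ^ (r * (r + 1) div 2) * (q ^ 2) ^ Suc r) * ((1 - (q ^ 2) ^ j) * PR (q ^ 2) (k - r) k)"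
    by (rule rearr5)
  also have "\<dots> = (-1) ^ Suc r * (q ^ 2) ^ (Suc r * (Suc r + 1) div 2) * PR (q ^ 2) j k"
    unfolding tri_Suc P1 power_add by simp
  finally show ?case unfolding j_def .
qed


lemma Zl:
  assumes q: "(q::real) \<noteq> 0"
  shows "(q powi (- 2 * int k)) ^ r = inverse ((q ^ 2) ^ (k * r))"
proof -
  have m: "- 2 * int k = - (2 * int k)" by simp
  have "q powi (- 2 * int k) = inverse ((q ^ 2) ^ k)"
    unfolding m power_int_minus powi2 ..
  thus ?thesis by (simp add: power_inverse power_mult)
qed

lemma qzero:
  assumes q: "(q::real) \<noteq> 0" and N: "1 \<le> N" "N \<le> r"
  shows "qpoch (q powi (2 - 2 * int N)) (q ^ 2) r = 0"
proof -
  have e1: "(q ^ 2) ^ (N - 1) = q powi (2 * int (N - 1))" by (rule powi2[symmetric])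
  have e2: "q powi (2 - 2 * int N + 2 * int (N - 1)) = q powi (2 - 2 * int N) * q powi (2 * int (N - 1))"
    by (rule power_int_add) (use q in simp)
  have e3: "2 - 2 * int N + 2 * int (N - 1) = 0" using N by simp
  have "q powi (2 - 2 * int N) * (q ^ 2) ^ (N - 1) = q powi (2 - 2 * int N + 2 * int (N - 1))"
    unfolding e1 e2 ..
  also have "\<dots> = 1" unfolding e3 by simp
  finally have one: "q powi (2 - 2 * int N) * (q ^ 2) ^ (N - 1) = 1" .
  have mem: "N - 1 \<in> {..<r}" using N by auto
  show ?thesis unfolding qpoch_def
    by (rule prod_zero) (use one mem in auto)
qed



lemma qpoch_nz:
  assumes q: "0 < q" "q < 1" and r: "r < n"
  shows "qpoch (q powi (2 - 2 * int n)) (q ^ 2) r \<noteq> 0"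
proof -
  have "1 - q powi (2 - 2 * int n) * (q ^ 2) ^ i \<noteq> 0" if i: "i \<in> {..<r}" for i
  proof -
    have Q: "0 < q ^ 2" "q ^ 2 < 1" using q by (auto simp: power_less_one_iff)
    have e: "q powi (2 - 2 * int n) * (q ^ 2) ^ i = inverse ((q ^ 2) ^ (n - Suc i))"
      by (rule pq) (use i r q in auto)
    have lt: "(q ^ 2) ^ (n - Suc i) < 1" using pow_lt1[OF Q, of "n - Suc i"] i r by simp
    thus ?thesis unfolding e by simp
  qed
  thus ?thesis unfolding qpoch_def by (simp add: prod_zero_iff)
qed



lemma E_hk:
  assumes q: "0 < q" "q < 1" and r: "r < k"
  shows "E_schur q alpha N (hk (k - r) r) = q powi (int k * (2 - 2 * int N - int alpha)) / (1 - q ^ 2) ^ k *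
     (Fh (q ^ 2) (k - r) r N * Fh (q ^ 2) (k - r) r (N + alpha) / cc (q ^ 2) (k - r) r)"
proof -
  have Q: "0 < q ^ 2" "q ^ 2 < 1" using q by (auto simp: power_less_one_iff)
  have sl: "sum_list (hk (k - r) r) = k" using r by (simp add: hk_def sum_list_replicate)
  have a: "0 < k - r" using r by simp
  have sp: "schur_pspec (hk (k - r) r) m q = Fh (q ^ 2) (k - r) r m" for m
  proof -
    have "(\<lambda>i. q ^ (2 * i)) = (\<lambda>i. (q ^ 2) ^ i)" by (simp add: power_mult)
    thus ?thesis unfolding schur_pspec_def using spec_hk[OF Q a] by simp
  qed
  have si: "schur_pspec_inf (hk (k - r) r) q = cc (q ^ 2) (k - r) r"
    unfolding schur_pspec_inf_def sp by (rule limI[OF Fh_lim[OF Q]])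
  show ?thesis unfolding E_schur_def Let_def sl sp si ..
qed

lemma TW:
  assumes q: "0 < q" "q < 1" and r: "r < k" and N: "1 \<le> N"
  shows "(-1) ^ r * (Fh (q ^ 2) (k - r) r N * Fh (q ^ 2) (k - r) r (N + alpha) / cc (q ^ 2) (k - r) r) =
    qpoch (q ^ (2 * N)) (q ^ 2) k * qpoch (q ^ (2 * N + 2 * alpha)) (q ^ 2) k / qpoch (q ^ 2) (q ^ 2) k *
    (qpoch (q powi (2 - 2 * int k)) (q ^ 2) r * qpoch (q powi (2 - 2 * int N)) (q ^ 2) r *
      qpoch (q powi (2 - 2 * int N - 2 * int alpha)) (q ^ 2) r /
     (qpoch (q powi (2 - 2 * int N - 2 * int k)) (q ^ 2) r *
      qpoch (q powi (2 - 2 * int N - 2 * int alpha - 2 * int k)) (q ^ 2) r * qpoch (q ^ 2) (q ^ 2) r) *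
     (q powi (- 2 * int k)) ^ r)"
proof (cases "N \<le> r")
  case True
  have "Fh (q ^ 2) (k - r) r N = 0" using Fh_zero True r by simp
  moreover have "qpoch (q powi (2 - 2 * int N)) (q ^ 2) r = 0" using qzero N True q by simp
  ultimately show ?thesis by simp
next
  case False
  hence rN: "r < N" by simp
  have k1: "1 \<le> k" using r by simp
  have Q: "0 < q ^ 2" "q ^ 2 < 1" using q by (auto simp: power_less_one_iff)
  have q0: "q \<noteq> 0" using q by simp
  have F1: "Fh (q ^ 2) (k - r) r N = cc (q ^ 2) (k - r) r * PR (q ^ 2) (N - r) (N + (k - r))"
    unfolding Fh_def using rN by simp
  have F2: "Fh (q ^ 2) (k - r) r (N + alpha) = cc (q ^ 2) (k - r) r * PR (q ^ 2) (N + alpha - r) (N + alpha + (k - r))"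
    unfolding Fh_def using rN by simp
  have ccd: "cc (q ^ 2) (k - r) r = (q ^ 2) ^ (r * (r + 1) div 2) /
      ((1 - (q ^ 2) ^ k) * PR (q ^ 2) 1 (k - r) * PR (q ^ 2) 1 (Suc r))"
    unfolding cc_def using r by simp
  have X1: "qpoch (q ^ (2 * N)) (q ^ 2) k = PR (q ^ 2) N (N + k)"
    using qpoch_PR[of q N k] by (simp add: power_mult)
  have X2: "qpoch (q ^ (2 * N + 2 * alpha)) (q ^ 2) k = PR (q ^ 2) (N + alpha) (N + alpha + k)"
  proof -
    have "q ^ (2 * N + 2 * alpha) = (q ^ 2) ^ (N + alpha)" by (simp add: power_mult[symmetric] algebra_simps)
    thus ?thesis using qpoch_PR[of q "N + alpha" k] by simp
  qed
  have Cq: "qpoch (q ^ 2) (q ^ 2) k = PR (q ^ 2) 1 (Suc k)" using qpoch_PR[of q 1 k] by simp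
  have Rq: "qpoch (q ^ 2) (q ^ 2) r = PR (q ^ 2) 1 (Suc r)" using qpoch_PR[of q 1 r] by simp
  have e3: "q powi (2 - 2 * int N - 2 * int alpha) = q powi (2 - 2 * int (N + alpha))" by (simp add: algebra_simps)
  have eb1: "q powi (2 - 2 * int N - 2 * int k) = q powi (2 - 2 * int (N + k))" by (simp add: algebra_simps)
  have eb2: "q powi (2 - 2 * int N - 2 * int alpha - 2 * int k) = q powi (2 - 2 * int (N + alpha + k))"
    by (simp add: algebra_simps)
  have h1: "qpoch (q powi (2 - 2 * int k)) (q ^ 2) r * (q ^ 2) ^ (k * r) =
     (-1) ^ r * (q ^ 2) ^ (r * (r + 1) div 2) * PR (q ^ 2) (k - r) k"
    using R2[OF q, of r k] r by simp
  have h2: "qpoch (q powi (2 - 2 * int N)) (q ^ 2) r =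
     (q ^ 2) ^ (k * r) * PR (q ^ 2) (N - r) N / PR (q ^ 2) (N + k - r) (N + k)
       * qpoch (q powi (2 - 2 * int (N + k))) (q ^ 2) r"
    using R1[OF q k1, of r N] rN by simp
  have h3: "qpoch (q powi (2 - 2 * int (N + alpha))) (q ^ 2) r =
     (q ^ 2) ^ (k * r) * PR (q ^ 2) (N + alpha - r) (N + alpha) / PR (q ^ 2) (N + alpha + k - r) (N + alpha + k)
       * qpoch (q powi (2 - 2 * int (N + alpha + k))) (q ^ 2) r"
    using R1[OF q k1, of r "N + alpha"] rN by (simp add: add.assoc)
  have hz: "(q powi (- 2 * int k)) ^ r = inverse ((q ^ 2) ^ (k * r))" by (rule Zl[OF q0])
  have I1: "PR (q ^ 2) N (N + k) * PR (q ^ 2) (N - r) N = PR (q ^ 2) (N - r) (N + (k - r)) * PR (q ^ 2) (N + k - r) (N + k)"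
  proof -
    have "PR (q ^ 2) (N - r) N * PR (q ^ 2) N (N + k) = PR (q ^ 2) (N - r) (N + k)" by (rule PR_concat) auto
    moreover have "PR (q ^ 2) (N - r) (N + (k - r)) * PR (q ^ 2) (N + (k - r)) (N + k) = PR (q ^ 2) (N - r) (N + k)"
      by (rule PR_concat) auto
    moreover have "N + (k - r) = N + k - r" using r by simp
    ultimately show ?thesis by (simp add: mult.commute)
  qed
  have I2: "PR (q ^ 2) (N + alpha) (N + alpha + k) * PR (q ^ 2) (N + alpha - r) (N + alpha)
      = PR (q ^ 2) (N + alpha - r) (N + alpha + (k - r)) * PR (q ^ 2) (N + alpha + k - r) (N + alpha + k)"
  proof -
    have "PR (q ^ 2) (N + alpha - r) (N + alpha) * PR (q ^ 2) (N + alpha) (N + alpha + k) = PR (q ^ 2) (N + alpha - r) (N + alpha + k)"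
      by (rule PR_concat) auto
    moreover have "PR (q ^ 2) (N + alpha - r) (N + alpha + (k - r)) * PR (q ^ 2) (N + alpha + (k - r)) (N + alpha + k)
        = PR (q ^ 2) (N + alpha - r) (N + alpha + k)"
      by (rule PR_concat) auto
    moreover have "N + alpha + (k - r) = N + alpha + k - r" using r by simp
    ultimately show ?thesis by (simp add: mult.commute)
  qed
  have I3: "PR (q ^ 2) 1 (Suc k) = PR (q ^ 2) 1 (k - r) * PR (q ^ 2) (k - r) k * (1 - (q ^ 2) ^ k)"
  proof -
    have "PR (q ^ 2) 1 (k - r) * PR (q ^ 2) (k - r) k = PR (q ^ 2) 1 k" by (rule PR_concat) (use r in auto)
    moreover have "PR (q ^ 2) 1 (Suc k) = PR (q ^ 2) 1 k * (1 - (q ^ 2) ^ k)" by (rule PR_Suc_right) (use k1 in auto)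
    ultimately show ?thesis by simp
  qed
  have nzK: "(q ^ 2) ^ (k * r) \<noteq> 0" using q by simp
  have nzB1: "qpoch (q powi (2 - 2 * int (N + k))) (q ^ 2) r \<noteq> 0" by (rule qpoch_nz[OF q]) (use r in simp)
  have nzB2: "qpoch (q powi (2 - 2 * int (N + alpha + k))) (q ^ 2) r \<noteq> 0" by (rule qpoch_nz[OF q]) (use r in simp)
  have nzW1: "PR (q ^ 2) (N + k - r) (N + k) \<noteq> 0" using PR_pos[OF Q, of "N + k - r" "N + k"] r by simp
  have nzW2: "PR (q ^ 2) (N + alpha + k - r) (N + alpha + k) \<noteq> 0" using PR_pos[OF Q, of "N + alpha + k - r" "N + alpha + k"] r by simp
  have nzR: "PR (q ^ 2) 1 (Suc r) \<noteq> 0" using PR_pos[OF Q, of 1 "Suc r"] by simp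
  have nzA: "PR (q ^ 2) 1 (k - r) \<noteq> 0" using PR_pos[OF Q, of 1 "k - r"] by simp
  have nzD: "1 - (q ^ 2) ^ k \<noteq> 0" using pow_lt1[OF Q, of k] k1 by simp
  have nzY1: "PR (q ^ 2) (N - r) N \<noteq> 0" using PR_pos[OF Q, of "N - r" N] rN by simp
  have nzY2: "PR (q ^ 2) (N + alpha - r) (N + alpha) \<noteq> 0" using PR_pos[OF Q, of "N + alpha - r" "N + alpha"] rN by simp
  have nzBk: "PR (q ^ 2) (k - r) k \<noteq> 0" using PR_pos[OF Q, of "k - r" k] r by simp
  have nzs: "(-1::real) ^ r \<noteq> 0" by simp
  show ?thesis
    unfolding F1 F2 ccd X1 X2 Cq Rq e3 eb1 eb2
    by (rule algT[OF nzK nzB1 nzW1 nzB2 nzW2 nzR nzA nzD nzY1 nzY2 nzBk nzs h1 h2 h3 hz I1 I2 I3])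
qed

theorem mainTheorem4:
  fixes q :: real and alpha k N :: nat
  assumes "0 < q" "q < 1" "1 \<le> k" "1 \<le> N"
  shows "moment q alpha k N =
    q powi (int k * (2 - 2 * int N - int alpha)) / (real N * (1 - q^2) ^ k) *
    (qpoch (q ^ (2 * N)) (q^2) k * qpoch (q ^ (2 * N + 2 * alpha)) (q^2) k / qpoch (q^2) (q^2) k) *
    phi32_trunc (q powi (2 - 2 * int k)) (q powi (2 - 2 * int N))
                (q powi (2 - 2 * int N - 2 * int alpha))
                (q powi (2 - 2 * int N - 2 * int k)) (q powi (2 - 2 * int N - 2 * int alpha - 2 * int k))
                (q^2) (q powi (- 2 * int k)) k"
proof -
  note q = assms(1,2)
  define pre where "pre = q powi (int k * (2 - 2 * int N - int alpha)) / (1 - q ^ 2) ^ k"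
  define QP where "QP = qpoch (q ^ (2 * N)) (q^2) k * qpoch (q ^ (2 * N + 2 * alpha)) (q^2) k / qpoch (q^2) (q^2) k"
  define tm where "tm l = qpoch (q powi (2 - 2 * int k)) (q ^ 2) l * qpoch (q powi (2 - 2 * int N)) (q ^ 2) l *
      qpoch (q powi (2 - 2 * int N - 2 * int alpha)) (q ^ 2) l /
     (qpoch (q powi (2 - 2 * int N - 2 * int k)) (q ^ 2) l *
      qpoch (q powi (2 - 2 * int N - 2 * int alpha - 2 * int k)) (q ^ 2) l * qpoch (q ^ 2) (q ^ 2) l) *
     (q powi (- 2 * int k)) ^ l" for l
  have "moment q alpha k N = 1 / real N * (\<Sum>lam\<in>partitions k. c0 k lam * E_schur q alpha N lam)"
    unfolding moment_def chi_cycle_eq[OF assms(3)] ..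
  also have "\<dots> = 1 / real N * (\<Sum>r<k. (-1) ^ r * E_schur q alpha N (hk (k - r) r))"
    unfolding c0_sum ..
  also have "(\<Sum>r<k. (-1) ^ r * E_schur q alpha N (hk (k - r) r)) = (\<Sum>r<k. pre * (QP * tm r))"
  proof (rule sum.cong[OF refl])
    fix r assume "r \<in> {..<k}"
    hence r: "r < k" by simp
    have "(-1) ^ r * E_schur q alpha N (hk (k - r) r) = pre * ((-1) ^ r *
       (Fh (q ^ 2) (k - r) r N * Fh (q ^ 2) (k - r) r (N + alpha) / cc (q ^ 2) (k - r) r))"
      unfolding E_hk[OF q r] pre_def by (simp add: ac_simps)
    also have "\<dots> = pre * (QP * tm r)" unfolding TW[OF q r assms(4)] QP_def tm_def ..
    finally show "(-1) ^ r * E_schur q alpha N (hk (k - r) r) = pre * (QP * tm r)" .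
  qed
  also have "(\<Sum>r<k. pre * (QP * tm r)) = pre * QP * (\<Sum>r<k. tm r)"
    by (simp add: sum_distrib_left mult.assoc)
  also have "(\<Sum>r<k. tm r) = phi32_trunc (q powi (2 - 2 * int k)) (q powi (2 - 2 * int N))
                (q powi (2 - 2 * int N - 2 * int alpha))
                (q powi (2 - 2 * int N - 2 * int k)) (q powi (2 - 2 * int N - 2 * int alpha - 2 * int k))
                (q^2) (q powi (- 2 * int k)) k"
    unfolding phi32_trunc_def tm_def ..
  finally show ?thesis unfolding pre_def QP_def by (simp add: ac_simps)
qed


end
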